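(* Let $k\in\mathbb C$ with $\Re(k)<0$, and let $f:\mathbb Q\to\mathbb C$ be $1$-periodic (i.e. $f(x+1)=f(x)$ for all $x\in\mathbb Q$). Let $h:\mathbb R\setminus\{0\}\to\mathbb C$ be such that $$h(x)=f(x)-|x|^{-k}f(-1/x)\qquad (x\in\mathbb Q\setminus\{0\}),$$ and assume that $h$ is continuous on $[-1,1]\setminus\{0\}$ with finite left and right limits $h(0^-)$, $h(0^+)$ at $0$. Then the function $$f^\dagger(x):=\begin{cases} f(x) & x\in\mathbb Q,\\ \lim_{\mathbb Q\ni y\to x} f(y) & x\notin\mathbb Q\end{cases}$$ is well defined for all $x\in\mathbb R$ (i.e. the limit exists for every irrational $x$) and is continuous on $\mathbb R\setminus\mathbb Q$. Moreover, for any rational $x=a/q$ in reduced form ($q\geq 1$), one has $f^\dagger(y)\to f(x)+q^k(h(0^+)-f(0))$ as $y\to x^+$ and $f^\dagger(y)\to f(x)+q^k(h(0^-)-f(0))$ as $y\to x^-$. In particular, $f^\dagger$ is continuous on $\mathbb R$ if and only if $h(0^+)=h(0^-)=f(0)$. Furthermore, in this case (i.e. when $h(0^\pm)=f(0)$), if $h\in\mathcal C^m([-1,1],\mathbb C)$ for an integer $m$ with $0\leq m<|\Re(k)|/2$, then $f^\dagger\in\mathcal C^m(\mathbb R,\mathbb C)$.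
   Context: For $z\in\mathbb C$ and $t>0$, $t^{z}=e^{z\log t}$. In the last sentence, $h\in\mathcal C^m([-1,1])$ means that $h$ (extended at $0$ by its common one-sided limit) is $m$ times continuously differentiable on $[-1,1]$. *)

theory Defs
  imports "HOL-Analysis.Analysis"
begin

definition fdag :: "(real \<Rightarrow> complex) \<Rightarrow> real \<Rightarrow> complex" where
  "fdag f x = (if x \<in> \<rat> then f x else Lim (at x within \<rat>) f)"

definition Cm_on :: "nat \<Rightarrow> real set \<Rightarrow> (real \<Rightarrow> complex) \<Rightarrow> bool" where
  "Cm_on m S g \<longleftrightarrow> (\<exists>D :: nat \<Rightarrow> real \<Rightarrow> complex.
      (\<forall>x\<in>S. D 0 x = g x) \<and>
      (\<forall>j<m. \<forall>x\<in>S. (D j has_vector_derivative D (Suc j) x) (at x within S)) \<and>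
      (\<forall>j\<le>m. continuous_on S (D j)))"

end

theory Submission
  imports Defs
begin


definition Wt :: "complex \<Rightarrow> real \<Rightarrow> complex" where
  "Wt s r = (if r = 0 then 0 else exp (s * complex_of_real (ln \<bar>r\<bar>)))"

lemma Wt_powr: "complex_of_real \<bar>r\<bar> powr s = Wt s r"
  by (simp add: Wt_def powr_def Ln_of_real)

lemma norm_Wt: "r \<noteq> 0 \<Longrightarrow> norm (Wt s r) = \<bar>r\<bar> powr Re s"
proof -
  assume r: "r \<noteq> 0"
  have "\<bar>r\<bar> powr Re s = exp (Re s * ln \<bar>r\<bar>)" using r unfolding powr_def by simp
  then show ?thesis using r by (simp add: Wt_def)
qed

lemma Wt_add: "Wt (s + t) r = Wt s r * Wt t r"
  by (simp add: Wt_def distrib_right exp_add)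

lemma Wt_minus1: "r \<noteq> 0 \<Longrightarrow> Wt (s - 1) r = Wt s r / of_real \<bar>r\<bar>"
  by (simp add: Wt_def exp_diff left_diff_distrib exp_of_real)

lemma Wt_deriv:
  assumes "r \<noteq> 0"
  shows "(Wt s has_vector_derivative (s * of_real (sgn r) * Wt (s - 1) r)) (at r)"
proof -
  have d1: "((\<lambda>t. ln \<bar>t\<bar>) has_real_derivative (1 / r)) (at r)"
  proof (cases "r > 0")
    case True
    have "(ln has_real_derivative (1 / r)) (at r)" using True by (auto intro!: derivative_eq_intros)
    then show ?thesis by (rule has_field_derivative_transform_within_open[where S="{0<..}"]) (use True in auto)
  next
    case False
    then have r: "r < 0" using assms by auto
    have "((\<lambda>t. ln (- t)) has_real_derivative (1 / r)) (at r)" using r by (auto intro!: derivative_eq_intros simp: field_simps)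
    then show ?thesis by (rule has_field_derivative_transform_within_open[where S="{..<0}"]) (use r in auto)
  qed
  have "((\<lambda>t. exp (s * complex_of_real (ln \<bar>t\<bar>))) has_vector_derivative
     (of_real (1 / r) * (s * exp (s * complex_of_real (ln \<bar>r\<bar>))))) (at r)"
  proof -
    have "((\<lambda>z. exp (s * z)) has_field_derivative (s * exp (s * complex_of_real (ln \<bar>r\<bar>)))) (at (complex_of_real (ln \<bar>r\<bar>)))"
      by (auto intro!: derivative_eq_intros)
    from field_vector_diff_chain_at[OF has_vector_derivative_of_real[OF d1] this]
    show ?thesis by (simp add: o_def)
  qed
  moreover have "of_real (1 / r) * (s * exp (s * complex_of_real (ln \<bar>r\<bar>))) = s * of_real (sgn r) * Wt (s - 1) r"
  proof -
    have e: "exp (s * complex_of_real (ln \<bar>r\<bar>)) = Wt s r" using assms by (simp add: Wt_def)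
    show ?thesis unfolding e Wt_minus1[OF assms] using assms
      by (cases "r > 0") (auto simp: sgn_if field_simps)
  qed
  ultimately have "((\<lambda>t. exp (s * complex_of_real (ln \<bar>t\<bar>))) has_vector_derivative
     (s * of_real (sgn r) * Wt (s - 1) r)) (at r)" by simp
  then show ?thesis
    by (rule has_vector_derivative_transform_within_open[where S="-{0}"]) (use assms in \<open>auto simp: Wt_def\<close>)
qed

lemma Wt_minus2: "r \<noteq> 0 \<Longrightarrow> Wt (s - 2) r = Wt s r / of_real (r^2)"
proof -
  assume r: "r \<noteq> 0"
  have "Wt (s - 2) r = Wt ((s - 1) - 1) r" by (simp add: algebra_simps)
  also have "\<dots> = Wt s r / of_real \<bar>r\<bar> / of_real \<bar>r\<bar>" using Wt_minus1[OF r, of "s-1"] Wt_minus1[OF r, of s] by simp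
  also have "\<dots> = Wt s r / (of_real (\<bar>r\<bar> * \<bar>r\<bar>))" by (simp add: divide_divide_eq_left flip: of_real_mult)
  also have "\<dots> = Wt s r / of_real (r^2)" by (simp add: power2_eq_square abs_mult_self_eq)
  finally show ?thesis .
qed

lemma norm_Wt_le: "norm (Wt s r) = \<bar>r\<bar> powr Re s"
proof (cases "r = 0")
  case False then show ?thesis by (rule norm_Wt)
qed (simp add: Wt_def)

definition Ee :: "bool \<Rightarrow> real \<Rightarrow> complex" where
  "Ee e r = (if e then complex_of_real (sgn r) else 1)"

definition Z :: "bool \<Rightarrow> complex \<Rightarrow> (real \<Rightarrow> complex) \<Rightarrow> real \<Rightarrow> complex" where
  "Z e s g r = (if r = 0 then 0 else Ee e r * Wt s r * g (- 1 / r))"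

lemma Z_0[simp]: "Z e s g 0 = 0" by (simp add: Z_def)

lemma norm_Ee: "r \<noteq> 0 \<Longrightarrow> norm (Ee e r) = 1"
  by (auto simp: Ee_def sgn_if)

lemma Z_norm_le:
  assumes "\<And>y. norm (g y) \<le> B"
  shows "norm (Z e s g r) \<le> \<bar>r\<bar> powr Re s * B"
proof (cases "r = 0")
  case False
  then show ?thesis
    by (simp add: Z_def norm_mult norm_Ee norm_Wt_le assms mult_left_mono)
qed simp

lemma Z_deriv:
  assumes r: "r \<noteq> 0" and dg: "(g has_vector_derivative d (- 1 / r)) (at (- 1 / r))"
  shows "(Z e s g has_vector_derivative (s * Z (\<not> e) (s - 1) g r + Z e (s - 2) d r)) (at r)"
proof -
  have dinv: "((\<lambda>t. - 1 / t) has_vector_derivative (1 / r^2)) (at r)"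
    using r unfolding has_real_derivative_iff_has_vector_derivative[symmetric]
    by (auto intro!: derivative_eq_intros simp: power2_eq_square)
  have dgc: "((\<lambda>t. g (- 1 / t)) has_vector_derivative ((1 / r^2) *\<^sub>R d (- 1 / r))) (at r)"
    using vector_diff_chain_at[OF dinv dg] by (simp add: o_def)
  have dp: "((\<lambda>t. Ee e r * (Wt s t * g (- 1 / t))) has_vector_derivative
      Ee e r * (Wt s r * ((1 / r^2) *\<^sub>R d (- 1 / r)) + (s * of_real (sgn r) * Wt (s - 1) r) * g (- 1 / r))) (at r)"
    by (intro derivative_intros Wt_deriv r dgc)
  have eq: "Ee e r * (Wt s r * ((1 / r^2) *\<^sub>R d (- 1 / r)) + (s * of_real (sgn r) * Wt (s - 1) r) * g (- 1 / r))
     = s * Z (\<not> e) (s - 1) g r + Z e (s - 2) d r"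
    using r by (cases "r > 0") (auto simp: Z_def Ee_def Wt_minus2 scaleR_conv_of_real sgn_if field_simps)
  have "((\<lambda>t. Ee e r * (Wt s t * g (- 1 / t))) has_vector_derivative
      (s * Z (\<not> e) (s - 1) g r + Z e (s - 2) d r)) (at r)" using dp eq by simp
  then show ?thesis
  proof (rule has_vector_derivative_transform_within_open[where S="{t. t \<noteq> 0 \<and> sgn t = sgn r}"])
    show "open {t. t \<noteq> 0 \<and> sgn t = sgn r}"
    proof (cases "r > 0")
      case True
      then have "{t. t \<noteq> 0 \<and> sgn t = sgn r} = {0<..}" by (auto simp: sgn_if)
      then show ?thesis by simp
    next
      case False
      then have "{t. t \<noteq> 0 \<and> sgn t = sgn r} = {..<0}" using r by (auto simp: sgn_if)
      then show ?thesis by simp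
    qed
  qed (use r in \<open>auto simp: Z_def Ee_def\<close>)
qed

lemma deriv_zero_by_norm:
  fixes q :: "real \<Rightarrow> complex"
  assumes "q x0 = 0" "((\<lambda>y. norm (q y) / \<bar>y - x0\<bar>) \<longlongrightarrow> 0) (at x0 within S)"
  shows "(q has_vector_derivative 0) (at x0 within S)"
  unfolding has_vector_derivative_def has_derivative_iff_norm
  using assms by (simp add: bounded_linear_zero)

lemma powr_tendsto0_at: "a > 0 \<Longrightarrow> ((\<lambda>y::real. \<bar>y\<bar> powr a) \<longlongrightarrow> 0) (at 0 within S)"
  by (rule tendsto_zero_powrI) (auto intro!: tendsto_eq_intros)

lemma Z_tendsto0:
  assumes "Re s > 0" "\<And>y. norm (g y) \<le> B"
  shows "(Z e s g \<longlongrightarrow> 0) (at 0 within S)"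
proof (rule Lim_null_comparison)
  show "\<forall>\<^sub>F x in at 0 within S. norm (Z e s g x) \<le> \<bar>x\<bar> powr Re s * B"
    using Z_norm_le[OF assms(2)] by auto
  show "((\<lambda>x. \<bar>x\<bar> powr Re s * B) \<longlongrightarrow> 0) (at 0 within S)"
    using tendsto_mult_left_zero[OF powr_tendsto0_at[OF assms(1)]] by simp
qed

lemma Z_deriv0:
  assumes "Re s > 1" "\<And>y. norm (g y) \<le> B"
  shows "(Z e s g has_vector_derivative 0) (at 0 within S)"
proof (rule deriv_zero_by_norm)
  show "((\<lambda>y. norm (Z e s g y) / \<bar>y - 0\<bar>) \<longlongrightarrow> 0) (at 0 within S)"
  proof (rule Lim_null_comparison)
    have "norm (norm (Z e s g x) / \<bar>x - 0\<bar>) \<le> \<bar>x\<bar> powr (Re s - 1) * B" if "x \<noteq> 0" for x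
    proof -
      have "norm (Z e s g x) \<le> \<bar>x\<bar> powr Re s * B" by (rule Z_norm_le[OF assms(2)])
      also have "\<dots> = \<bar>x\<bar> * (\<bar>x\<bar> powr (Re s - 1) * B)" using that by (simp add: powr_diff)
      finally show ?thesis using that by (simp add: field_simps)
    qed
    then show "\<forall>\<^sub>F x in at 0 within S. norm (norm (Z e s g x) / \<bar>x - 0\<bar>) \<le> \<bar>x\<bar> powr (Re s - 1) * B"
      by (auto simp: eventually_at_filter)
    show "((\<lambda>x. \<bar>x\<bar> powr (Re s - 1) * B) \<longlongrightarrow> 0) (at 0 within S)"
      by (intro tendsto_mult_left_zero powr_tendsto0_at) (use assms(1) in auto)
  qed
qed simp

lemma open_sgn_set: "r \<noteq> 0 \<Longrightarrow> open {t::real. t \<noteq> 0 \<and> sgn t = sgn r}"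
proof (cases "r > 0")
  case True
  then have "{t. t \<noteq> 0 \<and> sgn t = sgn r} = {0<..}" by (auto simp: sgn_if)
  then show ?thesis by simp
next
  case False
  assume "r \<noteq> 0"
  then have "{t. t \<noteq> 0 \<and> sgn t = sgn r} = {..<0}" using False by (auto simp: sgn_if)
  then show ?thesis by simp
qed

lemma Z_isCont:
  assumes r: "r \<noteq> 0" and g: "isCont g (- 1 / r)"
  shows "isCont (Z e s g) r"
proof -
  have c1: "isCont (\<lambda>t. g (- 1 / t)) r"
    using r g by (auto intro!: continuous_intros isCont_o2[where g=g])
  have c2: "isCont (Wt s) r"
    using Wt_deriv[OF r] by (rule has_vector_derivative_continuous)
  have c: "isCont (\<lambda>t. Ee e r * Wt s t * g (- 1 / t)) r"
    using c1 c2 by (intro continuous_intros) auto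
  have "eventually (\<lambda>t. t \<in> {t. t \<noteq> 0 \<and> sgn t = sgn r}) (nhds r)"
    using r by (intro eventually_nhds_in_open open_sgn_set) auto
  then have "eventually (\<lambda>t. Ee e r * Wt s t * g (- 1 / t) = Z e s g t) (nhds r)"
    by eventually_elim (auto simp: Z_def Ee_def)
  then show ?thesis using c isCont_cong by fastforce
qed

lemma Z_isCont0:
  assumes "Re s > 0" "\<And>y. norm (g y) \<le> B"
  shows "isCont (Z e s g) 0"
  unfolding isCont_def using Z_tendsto0[OF assms, where S=UNIV] by simp

lemma Z_isCont_all:
  assumes "Re s > 0" "\<And>y. norm (g y) \<le> B" "\<And>y. isCont g y"
  shows "isCont (Z e s g) r"
proof (cases "r = 0")
  case True
  then show ?thesis using Z_isCont0[OF assms(1,2)] by simp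
next
  case False
  then show ?thesis using Z_isCont assms(3) by blast
qed

lemma Z_deriv_all:
  assumes "Re s > 1" "\<And>y. norm (g y) \<le> B" "\<And>y. (g has_vector_derivative d y) (at y)"
  shows "(Z e s g has_vector_derivative (s * Z (\<not> e) (s - 1) g r + Z e (s - 2) d r)) (at r)"
proof (cases "r = 0")
  case True
  then show ?thesis using Z_deriv0[OF assms(1,2), where S=UNIV] by simp
next
  case False
  then show ?thesis using Z_deriv assms(3) by blast
qed

lemma Z_add: "Z e s (\<lambda>y. g1 y + g2 y) r = Z e s g1 r + Z e s g2 r"
  by (simp add: Z_def algebra_simps)
lemma Z_diff: "Z e s (\<lambda>y. g1 y - g2 y) r = Z e s g1 r - Z e s g2 r"
  by (simp add: Z_def algebra_simps)

section \<open>C^m algebra\<close>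

lemma Cm_zero: "Cm_on 0 S g \<longleftrightarrow> continuous_on S g"
proof
  assume "Cm_on 0 S g"
  then obtain D where D: "\<forall>x\<in>S. D 0 x = g x" "continuous_on S (D 0)" unfolding Cm_on_def by auto
  then show "continuous_on S g" using continuous_on_cong by blast
next
  assume "continuous_on S g"
  then show "Cm_on 0 S g" unfolding Cm_on_def by (intro exI[of _ "\<lambda>_. g"]) auto
qed

lemma Cm_SucI:
  assumes d: "\<And>x. x \<in> S \<Longrightarrow> (g has_vector_derivative g' x) (at x within S)"
    and c: "continuous_on S g" and m: "Cm_on m S g'"
  shows "Cm_on (Suc m) S g"
proof -
  obtain D where D: "\<forall>x\<in>S. D 0 x = g' x"
      "\<forall>j<m. \<forall>x\<in>S. (D j has_vector_derivative D (Suc j) x) (at x within S)"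
      "\<forall>j\<le>m. continuous_on S (D j)"
    using m unfolding Cm_on_def by blast
  define D' where "D' j = (if j = 0 then g else D (j - 1))" for j
  show ?thesis unfolding Cm_on_def
  proof (intro exI[of _ D'] conjI ballI allI impI)
    fix x assume "x \<in> S" then show "D' 0 x = g x" by (simp add: D'_def)
  next
    fix j x assume j: "j < Suc m" and x: "x \<in> S"
    show "(D' j has_vector_derivative D' (Suc j) x) (at x within S)"
    proof (cases j)
      case 0
      then show ?thesis using d[OF x] D(1) x by (simp add: D'_def)
    next
      case (Suc i)
      then show ?thesis using D(2) j x by (simp add: D'_def)
    qed
  next
    fix j assume "j \<le> Suc m"
    then show "continuous_on S (D' j)" using D(3) c by (cases j) (auto simp: D'_def)
  qed
qed

lemma Cm_SucD:
  assumes "Cm_on (Suc m) S g"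
  obtains g' where "\<And>x. x \<in> S \<Longrightarrow> (g has_vector_derivative g' x) (at x within S)"
    "continuous_on S g" "Cm_on m S g'"
proof -
  obtain D where D: "\<forall>x\<in>S. D 0 x = g x"
      "\<forall>j<Suc m. \<forall>x\<in>S. (D j has_vector_derivative D (Suc j) x) (at x within S)"
      "\<forall>j\<le>Suc m. continuous_on S (D j)"
    using assms unfolding Cm_on_def by blast
  have "(g has_vector_derivative D 1 x) (at x within S)" if x: "x \<in> S" for x
  proof -
    have "(D 0 has_vector_derivative D 1 x) (at x within S)" using D(2) x by auto
    from has_vector_derivative_transform_within[OF this zero_less_one x] D(1)
    show ?thesis by auto
  qed
  moreover have "continuous_on S g" using D(1,3) continuous_on_cong by fastforce
  moreover have "Cm_on m S (D 1)" unfolding Cm_on_def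
    by (intro exI[of _ "\<lambda>j. D (Suc j)"]) (use D in auto)
  ultimately show ?thesis using that by blast
qed

lemma Cm_add:
  assumes "Cm_on m S f" "Cm_on m S g"
  shows "Cm_on m S (\<lambda>x. f x + g x)"
proof -
  obtain D where D: "\<forall>x\<in>S. D 0 x = f x"
      "\<forall>j<m. \<forall>x\<in>S. (D j has_vector_derivative D (Suc j) x) (at x within S)"
      "\<forall>j\<le>m. continuous_on S (D j)"
    using assms(1) unfolding Cm_on_def by blast
  obtain E where E: "\<forall>x\<in>S. E 0 x = g x"
      "\<forall>j<m. \<forall>x\<in>S. (E j has_vector_derivative E (Suc j) x) (at x within S)"
      "\<forall>j\<le>m. continuous_on S (E j)"
    using assms(2) unfolding Cm_on_def by blast
  have "((\<lambda>x. D j x + E j x) has_vector_derivative D (Suc j) x + E (Suc j) x) (at x within S)"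
    if "j < m" "x \<in> S" for j x
    using has_vector_derivative_add[OF D(2)[rule_format, OF that] E(2)[rule_format, OF that]] .
  moreover have "continuous_on S (\<lambda>x. D j x + E j x)" if "j \<le> m" for j
    using D(3) E(3) that by (intro continuous_on_add) auto
  ultimately show ?thesis unfolding Cm_on_def
    by (intro exI[of _ "\<lambda>j x. D j x + E j x"]) (use D(1) E(1) in auto)
qed

lemma Cm_cmult:
  assumes "Cm_on m S f"
  shows "Cm_on m S (\<lambda>x. c * f x)"
proof -
  obtain D where D: "\<forall>x\<in>S. D 0 x = f x"
      "\<forall>j<m. \<forall>x\<in>S. (D j has_vector_derivative D (Suc j) x) (at x within S)"
      "\<forall>j\<le>m. continuous_on S (D j)"
    using assms(1) unfolding Cm_on_def by blast
  have "((\<lambda>x. c * D j x) has_vector_derivative c * D (Suc j) x) (at x within S)"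
    if "j < m" "x \<in> S" for j x
    using has_vector_derivative_mult[OF has_vector_derivative_const[of c] D(2)[rule_format, OF that]] by simp
  then show ?thesis unfolding Cm_on_def
    by (intro exI[of _ "\<lambda>j x. c * D j x"]) (use D in \<open>auto intro!: continuous_intros\<close>)
qed

lemma Cm_cong:
  assumes "Cm_on m S f" "\<And>x. x \<in> S \<Longrightarrow> f x = g x"
  shows "Cm_on m S g"
  using assms unfolding Cm_on_def by auto

lemma Cm_le:
  assumes "Cm_on m S f" "j \<le> m"
  shows "Cm_on j S f"
proof -
  obtain D where D: "\<forall>x\<in>S. D 0 x = f x"
      "\<forall>i<m. \<forall>x\<in>S. (D i has_vector_derivative D (Suc i) x) (at x within S)"
      "\<forall>i\<le>m. continuous_on S (D i)"
    using assms(1) unfolding Cm_on_def by blast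
  show ?thesis unfolding Cm_on_def
    by (intro exI[of _ D]) (use D assms(2) in auto)
qed

definition BCm :: "nat \<Rightarrow> (real \<Rightarrow> complex) \<Rightarrow> bool" where
  "BCm m g \<longleftrightarrow> (\<exists>D :: nat \<Rightarrow> real \<Rightarrow> complex. (\<forall>x. D 0 x = g x) \<and>
      (\<forall>j<m. \<forall>x. (D j has_vector_derivative D (Suc j) x) (at x)) \<and>
      (\<forall>j\<le>m. (\<forall>x. isCont (D j) x) \<and> (\<exists>B. \<forall>x. norm (D j x) \<le> B)))"

lemma BCm_zero: "BCm m g \<Longrightarrow> (\<forall>x. isCont g x) \<and> (\<exists>B. \<forall>x. norm (g x) \<le> B)"
proof -
  assume "BCm m g"
  then obtain D where D: "\<forall>x. D 0 x = g x" "\<forall>j\<le>m. (\<forall>x. isCont (D j) x) \<and> (\<exists>B. \<forall>x. norm (D j x) \<le> B)"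
    unfolding BCm_def by blast
  have "D 0 = g" using D(1) by auto
  then show ?thesis using D(2)[rule_format, of 0] by auto
qed

lemma BCm_SucD:
  assumes "BCm (Suc m) g"
  obtains g' where "\<And>x. (g has_vector_derivative g' x) (at x)" "BCm m g" "BCm m g'"
proof -
  obtain D where D: "\<forall>x. D 0 x = g x" "\<forall>j<Suc m. \<forall>x. (D j has_vector_derivative D (Suc j) x) (at x)"
    "\<forall>j\<le>Suc m. (\<forall>x. isCont (D j) x) \<and> (\<exists>B. \<forall>x. norm (D j x) \<le> B)"
    using assms unfolding BCm_def by blast
  have "D 0 = g" using D(1) by auto
  then have "(g has_vector_derivative D 1 x) (at x)" for x using D(2) by auto
  moreover have "BCm m g" unfolding BCm_def by (intro exI[of _ D]) (use D in auto)
  moreover have "BCm m (D 1)" unfolding BCm_def by (intro exI[of _ "\<lambda>j. D (Suc j)"]) (use D in auto)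
  ultimately show ?thesis using that by blast
qed

lemma BCm_imp_Cm: "BCm m g \<Longrightarrow> Cm_on m S g"
proof -
  assume "BCm m g"
  then obtain D where D: "\<forall>x. D 0 x = g x" "\<forall>j<m. \<forall>x. (D j has_vector_derivative D (Suc j) x) (at x)"
    "\<forall>j\<le>m. (\<forall>x. isCont (D j) x) \<and> (\<exists>B. \<forall>x. norm (D j x) \<le> B)"
    unfolding BCm_def by blast
  have "\<forall>j<m. \<forall>x\<in>S. (D j has_vector_derivative D (Suc j) x) (at x within S)"
    using D(2) has_vector_derivative_at_within by blast
  moreover have "\<forall>j\<le>m. continuous_on S (D j)"
    using D(3) continuous_at_imp_continuous_on by blast
  ultimately show ?thesis unfolding Cm_on_def using D(1) by blast
qed



lemma weight_lemma:
  "\<And>e s \<Phi>. 2 * real j < Re s \<Longrightarrow> BCm j \<Phi> \<Longrightarrow> Cm_on j S (Z e s \<Phi>)"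
proof (induction j)
  case 0
  obtain B where B: "\<And>x. norm (\<Phi> x) \<le> B" and c: "\<And>x. isCont \<Phi> x" using BCm_zero[OF 0(2)] by auto
  have "isCont (Z e s \<Phi>) r" for r using Z_isCont_all[of s \<Phi> B] 0(1) B c by auto
  then show ?case by (simp add: Cm_zero continuous_at_imp_continuous_on)
next
  case (Suc j)
  obtain \<Phi>' where d: "\<And>x. (\<Phi> has_vector_derivative \<Phi>' x) (at x)" and b: "BCm j \<Phi>" "BCm j \<Phi>'"
    using BCm_SucD[OF Suc(3)] by blast
  obtain B where B: "\<And>x. norm (\<Phi> x) \<le> B" using BCm_zero[OF b(1)] by auto
  define g' where "g' r = s * Z (\<not> e) (s - 1) \<Phi> r + Z e (s - 2) \<Phi>' r" for r
  have d': "(Z e s \<Phi> has_vector_derivative g' r) (at r)" for r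
    unfolding g'_def using Z_deriv_all[of s \<Phi> B \<Phi>' e r] Suc(2) B d by auto
  have "Cm_on j S g'"
    unfolding g'_def
  proof (intro Cm_add Cm_cmult)
    show "Cm_on j S (Z (\<not> e) (s - 1) \<Phi>)" using Suc.IH[of "s - 1" \<Phi> "\<not> e"] Suc(2) b(1) by auto
    show "Cm_on j S (Z e (s - 2) \<Phi>')" using Suc.IH[of "s - 2" \<Phi>' e] Suc(2) b(2) by auto
  qed
  moreover have "continuous_on S (Z e s \<Phi>)"
    using d' has_vector_derivative_continuous continuous_at_imp_continuous_on by blast
  ultimately show ?case
    using d' has_vector_derivative_at_within Cm_SucI by blast
qed

lemma per_int:
  fixes F :: "real \<Rightarrow> 'a"
  assumes p: "\<And>x. F (x + 1) = F x"
  shows "F (x + of_int n) = F x"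
proof -
  have nat: "F (y + real m) = F y" for y m
  proof (induction m)
    case (Suc m)
    have "F (y + real (Suc m)) = F ((y + real m) + 1)" by (simp add: algebra_simps)
    also have "\<dots> = F y" using p Suc by simp
    finally show ?case .
  qed simp
  show ?thesis
  proof (cases "n \<ge> 0")
    case True
    then obtain m where "n = int m" by (metis nonneg_eq_int)
    then show ?thesis using nat by simp
  next
    case False
    define m where "m = nat (- n)"
    have m: "n = - int m" using False by (simp add: m_def)
    have "F x = F ((x - real m) + real m)" by simp
    also have "\<dots> = F (x - real m)" by (rule nat)
    finally show ?thesis using m by simp
  qed
qed

lemma per_floor:
  fixes F :: "real \<Rightarrow> 'a"
  assumes p: "\<And>x. F (x + 1) = F x"
  shows "F (x - of_int \<lfloor>x\<rfloor>) = F x"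
  using per_int[where F=F, OF p, of "x - of_int \<lfloor>x\<rfloor>" "\<lfloor>x\<rfloor>"] by simp

lemma cont_bounded_compact:
  fixes F :: "real \<Rightarrow> complex"
  assumes "continuous_on S F" "compact S"
  shows "\<exists>B. \<forall>x\<in>S. norm (F x) \<le> B"
proof -
  have "bounded (F ` S)" using compact_imp_bounded[OF compact_continuous_image[OF assms]] .
  then show ?thesis unfolding bounded_iff by auto
qed

lemma per_bounded:
  fixes F :: "real \<Rightarrow> complex"
  assumes p: "\<And>x. F (x + 1) = F x" and c: "continuous_on {0..1} F"
  shows "\<exists>B. \<forall>x. norm (F x) \<le> B"
proof -
  obtain B where B: "\<forall>x\<in>{0..1}. norm (F x) \<le> B" using cont_bounded_compact[OF c] by auto
  have "norm (F x) \<le> B" for x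
  proof -
    have "x - of_int \<lfloor>x\<rfloor> \<in> {0..1}" by (auto simp: floor_le_iff) linarith
    then show ?thesis using B per_floor[where F=F, OF p, of x] by metis
  qed
  then show ?thesis by blast
qed

lemma per_deriv:
  assumes p: "\<And>x. F (x + 1) = F x" and d: "\<And>x. (F has_vector_derivative F' x) (at x)"
  shows "F' (x + 1) = F' x"
proof -
  have d1: "((\<lambda>t. t + 1) has_vector_derivative 1) (at x)"
    by (auto intro!: derivative_eq_intros simp: has_real_derivative_iff_has_vector_derivative[symmetric])
  have "((F \<circ> (\<lambda>t. t + 1)) has_vector_derivative (1 *\<^sub>R F' (x + 1))) (at x)"
    using vector_diff_chain_at[OF d1 d[of "x + 1"]] by simp
  moreover have "F \<circ> (\<lambda>t. t + 1) = F" using p by (auto simp: o_def)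
  ultimately have "(F has_vector_derivative F' (x + 1)) (at x)" by simp
  then show ?thesis using d[of x] vector_derivative_unique_at by blast
qed

lemma Cm_per_BCm:
  fixes F :: "real \<Rightarrow> complex"
  assumes Cm: "Cm_on m UNIV F" and p: "\<And>x. F (x + 1) = F x"
  shows "BCm m F"
proof -
  obtain D where D: "\<forall>x. D 0 x = F x"
      "\<forall>j<m. \<forall>x. (D j has_vector_derivative D (Suc j) x) (at x)"
      "\<forall>j\<le>m. continuous_on UNIV (D j)"
    using Cm unfolding Cm_on_def by auto
  have per: "\<forall>x. D j (x + 1) = D j x" if "j \<le> m" for j
    using that
  proof (induction j)
    case 0 then show ?case using D(1) p by simp
  next
    case (Suc j)
    then have "\<forall>x. D j (x + 1) = D j x" by simp
    then show ?case using per_deriv[of "D j" "D (Suc j)"] D(2) Suc(2) by simp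
  qed
  have "\<forall>j\<le>m. (\<forall>x. isCont (D j) x) \<and> (\<exists>B. \<forall>x. norm (D j x) \<le> B)"
  proof (intro allI impI conjI)
    fix j x assume "j \<le> m"
    then show "isCont (D j) x" using D(3) continuous_on_eq_continuous_at[OF open_UNIV] by blast
  next
    fix j assume j: "j \<le> m"
    show "\<exists>B. \<forall>x. norm (D j x) \<le> B"
      using per_bounded[of "D j"] per[OF j] D(3) j continuous_on_subset by blast
  qed
  then show ?thesis unfolding BCm_def using D(1,2) by blast
qed

section \<open>Partition of unity\<close>

definition psi :: "real \<Rightarrow> real" where
  "psi r = (if \<bar>r\<bar> < 1 then (cos (pi * r / 2))\<^sup>2 else 0)"

definition psi' :: "real \<Rightarrow> real" where
  "psi' r = (if \<bar>r\<bar> < 1 then - (pi / 2) * sin (pi * r) else 0)"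

lemma cos_shift_half: "cos (pi * (t - 1) / 2) = sin (pi * t / 2)"
proof -
  have "cos (pi * (t - 1) / 2) = cos (pi * t / 2 - pi / 2)" by (rule arg_cong[where f=cos]) (simp add: field_simps)
  also have "\<dots> = sin (pi * t / 2)" by (simp add: cos_diff)
  finally show ?thesis .
qed

lemma open_abs_gt1: "open {r::real. \<bar>r\<bar> > 1}"
proof -
  have "{r::real. \<bar>r\<bar> > 1} = {..<-1} \<union> {1<..}" by auto
  then show ?thesis by (auto intro!: open_Un)
qed

lemma psi_nonneg: "psi r \<ge> 0" by (simp add: psi_def)
lemma psi_le1: "psi r \<le> 1" by (simp add: psi_def cos_squared_eq)
lemma psi_out: "\<bar>r\<bar> \<ge> 1 \<Longrightarrow> psi r = 0" by (simp add: psi_def)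
lemma psi'_out: "\<bar>r\<bar> \<ge> 1 \<Longrightarrow> psi' r = 0" by (simp add: psi'_def)

lemma psi_sum:
  assumes "0 \<le> t" "t < 1"
  shows "psi t + psi (t - 1) = 1"
proof (cases "t = 0")
  case True then show ?thesis by (simp add: psi_def)
next
  case False
  then have t: "0 < t" using assms by simp
  have "cos (pi * (t - 1) / 2) = sin (pi * t / 2)" by (rule cos_shift_half)
  then show ?thesis using assms t by (simp add: psi_def)
qed

lemma psi_half1:
  assumes "0 \<le> t" "t \<le> 1/2"
  shows "psi t \<ge> 1/2"
proof -
  have "cos (pi / 4) \<le> cos (pi * t / 2)"
    using assms by (intro cos_monotone_0_pi_le) auto
  then have "sqrt 2 / 2 \<le> cos (pi * t / 2)" by (simp add: cos_45)
  then have "(sqrt 2 / 2)\<^sup>2 \<le> (cos (pi * t / 2))\<^sup>2"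
    by (intro power_mono) auto
  then show ?thesis using assms by (simp add: psi_def power_divide)
qed

lemma psi_half2:
  assumes "1/2 \<le> t" "t < 1"
  shows "psi (t - 1) \<ge> 1/2"
proof -
  have "psi (t - 1) = 1 - psi t" using psi_sum[of t] assms by simp
  have e: "cos (pi * (t - 1) / 2) = sin (pi * t / 2)" by (rule cos_shift_half)
  have "sin (pi / 4) \<le> sin (pi * t / 2)"
    using assms by (intro sin_monotone_2pi_le) auto
  then have "sqrt 2 / 2 \<le> sin (pi * t / 2)" by (simp add: sin_45)
  then have "(sqrt 2 / 2)\<^sup>2 \<le> (sin (pi * t / 2))\<^sup>2"
    by (intro power_mono) auto
  then show ?thesis using assms e by (simp add: psi_def power_divide)
qed

definition rho :: "real \<Rightarrow> real" where
  "rho a = (1 + (1/2) powr a) / 2"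

lemma rho_lt1: "a > 0 \<Longrightarrow> rho a < 1"
  unfolding rho_def using powr_less_mono2_neg[of "-a" "1/2" 1] by (simp add: powr_minus_divide)

lemma rho_pos: "rho a > 0"
  unfolding rho_def by (simp add: add_pos_nonneg)

lemma psi_rho:
  assumes a: "a > 0" and t: "0 \<le> t" "t < 1"
  shows "psi t * \<bar>t\<bar> powr a + psi (t - 1) * \<bar>t - 1\<bar> powr a \<le> rho a"
proof -
  have s: "psi t + psi (t - 1) = 1" using psi_sum t by simp
  have p1: "psi t \<ge> 0" "psi (t - 1) \<ge> 0" using psi_nonneg by auto
  have le1: "\<bar>t\<bar> powr a \<le> 1" "\<bar>t - 1\<bar> powr a \<le> 1" using t a by (auto intro!: powr_le1)
  show ?thesis
  proof (cases "t \<le> 1/2")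
    case True
    have h: "psi t \<ge> 1/2" using psi_half1 True t by simp
    have "\<bar>t\<bar> powr a \<le> (1/2) powr a" using True t a by (intro powr_mono2) auto
    then have "psi t * \<bar>t\<bar> powr a + psi (t - 1) * \<bar>t - 1\<bar> powr a \<le> psi t * (1/2) powr a + psi (t - 1) * 1"
      using p1 le1 by (intro add_mono mult_left_mono) auto
    also have "\<dots> = 1 - psi t * (1 - (1/2) powr a)" using s by (simp add: algebra_simps)
    also have "\<dots> \<le> 1 - 1/2 * (1 - (1/2) powr a)"
      using h le1 powr_le1[of a "1/2"] a by (intro diff_left_mono mult_right_mono) auto
    also have "\<dots> = rho a" by (simp add: rho_def field_simps)
    finally show ?thesis .
  next
    case False
    have h: "psi (t - 1) \<ge> 1/2" using psi_half2 False t by simp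
    have "\<bar>t - 1\<bar> powr a \<le> (1/2) powr a" using False t a by (intro powr_mono2) auto
    then have "psi t * \<bar>t\<bar> powr a + psi (t - 1) * \<bar>t - 1\<bar> powr a \<le> psi t * 1 + psi (t - 1) * (1/2) powr a"
      using p1 le1 by (intro add_mono mult_left_mono) auto
    also have "\<dots> = 1 - psi (t - 1) * (1 - (1/2) powr a)" using s by (simp add: algebra_simps)
    also have "\<dots> \<le> 1 - 1/2 * (1 - (1/2) powr a)"
      using h le1 powr_le1[of a "1/2"] a by (intro diff_left_mono mult_right_mono) auto
    also have "\<dots> = rho a" by (simp add: rho_def field_simps)
    finally show ?thesis .
  qed
qed

lemma psi_quad:
  assumes "\<bar>r0\<bar> = 1"
  shows "psi y \<le> (pi / 2)\<^sup>2 * (y - r0)\<^sup>2"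
proof (cases "\<bar>y\<bar> < 1")
  case True
  have "cos (pi * y / 2) = cos (pi * \<bar>y\<bar> / 2)" by (cases "y \<ge> 0") auto
  also have "\<dots> = sin (pi / 2 * (1 - \<bar>y\<bar>))"
  proof -
    have "cos (pi * \<bar>y\<bar> / 2) = sin (pi / 2 - pi * \<bar>y\<bar> / 2)" using cos_sin_eq[of "pi * \<bar>y\<bar> / 2"] by simp
    also have "\<dots> = sin (pi / 2 * (1 - \<bar>y\<bar>))" by (rule arg_cong[where f=sin]) (simp add: field_simps)
    finally show ?thesis .
  qed
  finally have e: "cos (pi * y / 2) = sin (pi / 2 * (1 - \<bar>y\<bar>))" .
  have "\<bar>sin (pi / 2 * (1 - \<bar>y\<bar>))\<bar> \<le> \<bar>pi / 2 * (1 - \<bar>y\<bar>)\<bar>" by (rule abs_sin_x_le_abs_x)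
  also have "\<dots> \<le> pi / 2 * \<bar>y - r0\<bar>"
  proof -
    have a: "0 \<le> 1 - \<bar>y\<bar>" using True by simp
    have b: "1 - \<bar>y\<bar> \<le> \<bar>y - r0\<bar>" using assms True by (cases "r0 = 1") auto
    have "\<bar>pi / 2 * (1 - \<bar>y\<bar>)\<bar> = pi / 2 * (1 - \<bar>y\<bar>)" using a by (simp add: abs_mult)
    also have "\<dots> \<le> pi / 2 * \<bar>y - r0\<bar>" using b by (intro mult_left_mono) auto
    finally show ?thesis .
  qed
  finally have "\<bar>cos (pi * y / 2)\<bar> \<le> pi / 2 * \<bar>y - r0\<bar>" using e by simp
  then have "\<bar>cos (pi * y / 2)\<bar>\<^sup>2 \<le> (pi / 2 * \<bar>y - r0\<bar>)\<^sup>2" by (intro power_mono) auto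
  also have "(pi / 2 * \<bar>y - r0\<bar>)\<^sup>2 = (pi / 2)\<^sup>2 * (y - r0)\<^sup>2" unfolding power_mult_distrib power2_abs ..
  finally show ?thesis using True by (simp add: psi_def)
qed (simp add: psi_def)

lemma psi'_lin:
  assumes "\<bar>r0\<bar> = 1"
  shows "\<bar>psi' y\<bar> \<le> pi\<^sup>2 / 2 * \<bar>y - r0\<bar>"
proof (cases "\<bar>y\<bar> < 1")
  case True
  have "\<bar>sin (pi * y)\<bar> = \<bar>sin (pi * (y - r0))\<bar>"
  proof -
    have "r0 = 1 \<or> r0 = -1" using assms by auto
    then show ?thesis
    proof
      assume "r0 = 1" then show ?thesis by (simp add: right_diff_distrib sin_diff)
    next
      assume "r0 = -1" then show ?thesis by (simp add: distrib_left sin_add)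
    qed
  qed
  also have "\<dots> \<le> \<bar>pi * (y - r0)\<bar>" by (rule abs_sin_x_le_abs_x)
  finally have "\<bar>sin (pi * y)\<bar> \<le> pi * \<bar>y - r0\<bar>" by (simp add: abs_mult)
  then show ?thesis using True by (simp add: psi'_def abs_mult power2_eq_square)
qed (simp add: psi'_def)

lemma real_deriv_zero_by_norm:
  fixes q :: "real \<Rightarrow> real"
  assumes "q x0 = 0" "((\<lambda>y. \<bar>q y\<bar> / \<bar>y - x0\<bar>) \<longlongrightarrow> 0) (at x0)"
  shows "(q has_real_derivative 0) (at x0)"
  unfolding has_field_derivative_def has_derivative_iff_norm
  using assms by (simp add: bounded_linear_mult_right)

lemma psi_deriv: "(psi has_real_derivative psi' r) (at r)"
proof -
  consider "\<bar>r\<bar> < 1" | "\<bar>r\<bar> > 1" | "\<bar>r\<bar> = 1" by linarith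
  then show ?thesis
  proof cases
    case 1
    have "((\<lambda>r. (cos (pi * r / 2))\<^sup>2) has_real_derivative
        2 * cos (pi * r / 2) * (- sin (pi * r / 2) * (pi / 2))) (at r)"
      by (auto intro!: derivative_eq_intros)
    moreover have "2 * cos (pi * r / 2) * (- sin (pi * r / 2) * (pi / 2)) = psi' r"
      using 1 sin_double[of "pi * r / 2"] by (simp add: psi'_def algebra_simps)
    ultimately have "((\<lambda>r. (cos (pi * r / 2))\<^sup>2) has_real_derivative psi' r) (at r)" by simp
    then show ?thesis
      by (rule has_field_derivative_transform_within_open[where S="{-1<..<1}"]) (use 1 in \<open>auto simp: psi_def\<close>)
  next
    case 2
    have "((\<lambda>r. 0) has_real_derivative psi' r) (at r)" using 2 by (simp add: psi'_def)
    then show ?thesis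
      by (rule has_field_derivative_transform_within_open[where S="{r. \<bar>r\<bar> > 1}"])
         (use 2 open_abs_gt1 in \<open>auto simp: psi_def\<close>)
  next
    case 3
    have "(psi has_real_derivative 0) (at r)"
    proof (rule real_deriv_zero_by_norm)
      show "psi r = 0" using 3 by (simp add: psi_def)
      show "((\<lambda>y. \<bar>psi y\<bar> / \<bar>y - r\<bar>) \<longlongrightarrow> 0) (at r)"
      proof (rule Lim_null_comparison)
        have "norm (\<bar>psi y\<bar> / \<bar>y - r\<bar>) \<le> (pi / 2)\<^sup>2 * \<bar>y - r\<bar>" if "y \<noteq> r" for y
          using psi_quad[OF 3, of y] psi_nonneg[of y] that
          by (simp add: divide_le_eq power2_eq_square abs_mult_self_eq mult.assoc)
        then show "\<forall>\<^sub>F y in at r. norm (\<bar>psi y\<bar> / \<bar>y - r\<bar>) \<le> (pi / 2)\<^sup>2 * \<bar>y - r\<bar>"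
          by (auto simp: eventually_at_filter)
        show "((\<lambda>y. (pi / 2)\<^sup>2 * \<bar>y - r\<bar>) \<longlongrightarrow> 0) (at r)"
          by (auto intro!: tendsto_eq_intros)
      qed
    qed
    then show ?thesis using 3 by (simp add: psi'_def)
  qed
qed

lemma psi_isCont: "isCont psi r"
  using psi_deriv DERIV_isCont by blast

lemma psi'_isCont: "isCont psi' r"
proof -
  consider "\<bar>r\<bar> < 1" | "\<bar>r\<bar> > 1" | "\<bar>r\<bar> = 1" by linarith
  then show ?thesis
  proof cases
    case 1
    have "isCont (\<lambda>r. - (pi / 2) * sin (pi * r)) r" by (intro continuous_intros)
    moreover have "eventually (\<lambda>y. y \<in> {-1<..<1}) (nhds r)" using 1 by (intro eventually_nhds_in_open) auto
    then have "eventually (\<lambda>y. - (pi / 2) * sin (pi * y) = psi' y) (nhds r)"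
      by eventually_elim (auto simp: psi'_def)
    ultimately show ?thesis using isCont_cong by fastforce
  next
    case 2
    have "eventually (\<lambda>y. y \<in> {y. \<bar>y\<bar> > 1}) (nhds r)" using 2
      by (intro eventually_nhds_in_open open_abs_gt1) auto
    then have "eventually (\<lambda>y. 0 = psi' y) (nhds r)"
      by eventually_elim (auto simp: psi'_def)
    then show ?thesis using isCont_cong continuous_const by fastforce
  next
    case 3
    have "(psi' \<longlongrightarrow> 0) (at r)"
    proof (rule Lim_null_comparison)
      show "\<forall>\<^sub>F y in at r. norm (psi' y) \<le> pi\<^sup>2 / 2 * \<bar>y - r\<bar>" using psi'_lin[OF 3] by auto
      show "((\<lambda>y. pi\<^sup>2 / 2 * \<bar>y - r\<bar>) \<longlongrightarrow> 0) (at r)" by (auto intro!: tendsto_eq_intros)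
    qed
    then show ?thesis using 3 by (simp add: isCont_def psi'_def)
  qed
qed

lemma psi'_bound: "\<bar>psi' r\<bar> \<le> pi / 2"
  by (simp add: psi'_def abs_mult)

section \<open>Periodization\<close>

definition Per :: "(real \<Rightarrow> 'a::ab_group_add) \<Rightarrow> real \<Rightarrow> 'a" where
  "Per Q x = Q (x - of_int \<lfloor>x\<rfloor>) + Q (x - of_int \<lfloor>x\<rfloor> - 1)"

lemma Per_periodic: "Per Q (x + 1) = Per Q x"
  by (simp add: Per_def)

lemma Per_psi: "Per psi x = 1"
  unfolding Per_def by (rule psi_sum) (auto, linarith)

lemma Per_sum:
  assumes supp: "\<And>r. \<bar>r\<bar> \<ge> 1 \<Longrightarrow> Q r = 0" and N: "finite N" "{\<lfloor>y\<rfloor>, \<lfloor>y\<rfloor> + 1} \<subseteq> N"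
  shows "Per Q y = (\<Sum>n\<in>N. Q (y - of_int n))"
proof -
  have "(\<Sum>n\<in>N. Q (y - of_int n)) = (\<Sum>n\<in>{\<lfloor>y\<rfloor>, \<lfloor>y\<rfloor> + 1}. Q (y - of_int n))"
  proof (rule sum.mono_neutral_right[OF N(1) N(2)])
    show "\<forall>n\<in>N - {\<lfloor>y\<rfloor>, \<lfloor>y\<rfloor> + 1}. Q (y - of_int n) = 0"
    proof
      fix n assume n: "n \<in> N - {\<lfloor>y\<rfloor>, \<lfloor>y\<rfloor> + 1}"
      have "\<bar>y - of_int n\<bar> \<ge> 1"
      proof (cases "n \<le> \<lfloor>y\<rfloor>")
        case True
        then have "n \<le> \<lfloor>y\<rfloor> - 1" using n by auto
        then have "of_int n \<le> of_int \<lfloor>y\<rfloor> - (1::real)" by linarith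
        then show ?thesis using of_int_floor_le[of y] by linarith
      next
        case False
        then have "n \<ge> \<lfloor>y\<rfloor> + 2" using n by auto
        then have "of_int n \<ge> of_int \<lfloor>y\<rfloor> + (2::real)" by linarith
        then show ?thesis using real_of_int_floor_add_one_gt[of y] by linarith
      qed
      then show "Q (y - of_int n) = 0" by (rule supp)
    qed
  qed
  also have "\<dots> = Per Q y" by (simp add: Per_def algebra_simps)
  finally show ?thesis by simp
qed

lemma Per_local_set:
  assumes "\<bar>y - x\<bar> < 1"
  shows "{\<lfloor>y\<rfloor>, \<lfloor>y\<rfloor> + 1} \<subseteq> {\<lfloor>x\<rfloor> - 1..\<lfloor>x\<rfloor> + 2}"
proof -
  have "\<lfloor>y\<rfloor> \<ge> \<lfloor>x\<rfloor> - 1" using assms by (simp add: le_floor_iff) linarith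
  moreover have "\<lfloor>y\<rfloor> \<le> \<lfloor>x\<rfloor> + 1" using assms by (simp add: floor_le_iff) linarith
  ultimately show ?thesis by auto
qed

lemma Per_eventually:
  assumes supp: "\<And>r. \<bar>r\<bar> \<ge> 1 \<Longrightarrow> Q r = 0"
  shows "eventually (\<lambda>y. (\<Sum>n\<in>{\<lfloor>x\<rfloor> - 1..\<lfloor>x\<rfloor> + 2}. Q (y - of_int n)) = Per Q y) (nhds x)"
proof -
  have "eventually (\<lambda>y. y \<in> ball x 1) (nhds x)" by (intro eventually_nhds_in_open) auto
  then show ?thesis
  proof eventually_elim
    case (elim y)
    then have "\<bar>y - x\<bar> < 1" by (simp add: dist_real_def abs_minus_commute)
    then have "{\<lfloor>y\<rfloor>, \<lfloor>y\<rfloor> + 1} \<subseteq> {\<lfloor>x\<rfloor> - 1..\<lfloor>x\<rfloor> + 2}" by (rule Per_local_set)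
    then have "Per Q y = (\<Sum>n\<in>{\<lfloor>x\<rfloor> - 1..\<lfloor>x\<rfloor> + 2}. Q (y - of_int n))"
      by (intro Per_sum supp) auto
    then show ?case by simp
  qed
qed

lemma Per_isCont:
  fixes Q :: "real \<Rightarrow> 'a::real_normed_vector"
  assumes supp: "\<And>r. \<bar>r\<bar> \<ge> 1 \<Longrightarrow> Q r = 0" and c: "\<And>n::int. isCont Q (x - of_int n)"
  shows "isCont (Per Q) x"
proof -
  have "isCont (\<lambda>y. Q (y - of_int n)) x" for n :: int
    by (rule isCont_o2[where f="\<lambda>y. y - of_int n" and a=x and g=Q]) (auto intro!: continuous_intros c)
  then have "isCont (\<lambda>y. \<Sum>n\<in>{\<lfloor>x\<rfloor> - 1..\<lfloor>x\<rfloor> + 2}. Q (y - of_int n)) x"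
    by (intro continuous_intros)
  moreover have "eventually (\<lambda>y. (\<Sum>n\<in>{\<lfloor>x\<rfloor> - 1..\<lfloor>x\<rfloor> + 2}. Q (y - of_int n)) = Per Q y) (nhds x)"
    by (rule Per_eventually) (rule supp)
  ultimately show ?thesis using isCont_cong by fastforce
qed

lemma Per_deriv:
  fixes Q :: "real \<Rightarrow> 'a::real_normed_vector"
  assumes supp: "\<And>r. \<bar>r\<bar> \<ge> 1 \<Longrightarrow> Q r = 0" and supp': "\<And>r. \<bar>r\<bar> \<ge> 1 \<Longrightarrow> Q' r = 0"
    and d: "\<And>n::int. (Q has_vector_derivative Q' (x - of_int n)) (at (x - of_int n))"
  shows "(Per Q has_vector_derivative Per Q' x) (at x)"
proof -
  define N where "N = {\<lfloor>x\<rfloor> - 1..\<lfloor>x\<rfloor> + 2}"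
  have dn: "((\<lambda>y. Q (y - of_int n)) has_vector_derivative Q' (x - of_int n)) (at x)" for n :: int
  proof -
    have d1: "((\<lambda>y. y - of_int n) has_vector_derivative 1) (at x)"
      by (auto intro!: derivative_eq_intros simp: has_real_derivative_iff_has_vector_derivative[symmetric])
    show ?thesis using vector_diff_chain_at[OF d1 d[of n]] by (simp add: o_def)
  qed
  have "((\<lambda>y. \<Sum>n\<in>N. Q (y - of_int n)) has_vector_derivative (\<Sum>n\<in>N. Q' (x - of_int n))) (at x)"
    by (intro has_vector_derivative_sum dn)
  moreover have "(\<Sum>n\<in>N. Q' (x - of_int n)) = Per Q' x"
  proof -
    have "{\<lfloor>x\<rfloor>, \<lfloor>x\<rfloor> + 1} \<subseteq> N" using Per_local_set[of x x] by (simp add: N_def)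
    then have "Per Q' x = (\<Sum>n\<in>N. Q' (x - of_int n))" by (intro Per_sum supp') (auto simp: N_def)
    then show ?thesis by simp
  qed
  ultimately have "((\<lambda>y. \<Sum>n\<in>N. Q (y - of_int n)) has_vector_derivative Per Q' x) (at x)" by simp
  then show ?thesis
  proof (rule has_vector_derivative_transform_within_open[where S="ball x 1"])
    fix y assume "y \<in> ball x 1"
    then have "\<bar>y - x\<bar> < 1" by (simp add: dist_real_def abs_minus_commute)
    then show "(\<Sum>n\<in>N. Q (y - of_int n)) = Per Q y"
    proof -
      have "{\<lfloor>y\<rfloor>, \<lfloor>y\<rfloor> + 1} \<subseteq> N" using Per_local_set[OF \<open>\<bar>y - x\<bar> < 1\<close>] by (simp add: N_def)
      then have "Per Q y = (\<Sum>n\<in>N. Q (y - of_int n))" by (intro Per_sum supp) (auto simp: N_def)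
      then show ?thesis by simp
    qed
  qed auto
qed

lemma Per_norm: "norm (Per Q x) \<le> norm (Q (x - of_int \<lfloor>x\<rfloor>)) + norm (Q (x - of_int \<lfloor>x\<rfloor> - 1))"
  unfolding Per_def by (rule norm_triangle_ineq)



lemma le_geom_zero:
  fixes a C \<tau> :: real
  assumes "\<And>n. a \<le> C * \<tau> ^ n" "0 \<le> \<tau>" "\<tau> < 1"
  shows "a \<le> 0"
proof -
  have "(\<lambda>n. C * \<tau> ^ n) \<longlonglongrightarrow> C * 0"
    by (intro tendsto_mult tendsto_const LIMSEQ_power_zero) (use assms in auto)
  then show ?thesis using assms(1) by (simp add: LIMSEQ_le_const)
qed

lemma geom_tendsto:
  fixes u :: "nat \<Rightarrow> 'a::real_normed_vector"
  assumes "\<And>n. norm (u n - L) \<le> C * \<tau> ^ n" "0 \<le> \<tau>" "\<tau> < 1"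
  shows "u \<longlonglongrightarrow> L"
proof -
  have "(\<lambda>n. C * \<tau> ^ n) \<longlonglongrightarrow> C * 0"
    by (intro tendsto_mult tendsto_const LIMSEQ_power_zero) (use assms in auto)
  then have l0: "(\<lambda>n. C * \<tau> ^ n) \<longlonglongrightarrow> 0" by simp
  have "(\<lambda>n. u n - L) \<longlonglongrightarrow> 0"
  proof (rule Lim_null_comparison[of _ "\<lambda>n. C * \<tau> ^ n"])
    show "\<forall>\<^sub>F n in sequentially. norm (u n - L) \<le> C * \<tau> ^ n" using assms(1) by simp
  qed (rule l0)
  then show ?thesis by (simp add: LIM_zero_iff)
qed

lemma geom_limit:
  fixes u :: "nat \<Rightarrow> real \<Rightarrow> complex"
  assumes d: "\<And>n x. norm (u (Suc n) x - u n x) \<le> C * \<tau> ^ n" and t: "0 \<le> \<tau>" "\<tau> < 1"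
  shows "\<exists>U. \<forall>x. (\<lambda>n. u n x) \<longlonglongrightarrow> U x \<and> (\<forall>n. norm (U x - u n x) \<le> C * \<tau> ^ n / (1 - \<tau>))"
proof -
  have "\<exists>L. (\<lambda>n. u n x) \<longlonglongrightarrow> L \<and> (\<forall>n. norm (L - u n x) \<le> C * \<tau> ^ n / (1 - \<tau>))" for x
  proof -
    define a where "a i = u (Suc i) x - u i x" for i
    have sg: "summable (\<lambda>i. C * \<tau> ^ i)" using t by (intro summable_mult summable_geometric) auto
    have sa: "summable (\<lambda>i. norm (a i))"
      by (rule summable_comparison_test[OF _ sg]) (use d in \<open>auto simp: a_def\<close>)
    then have sa': "summable a" by (rule summable_norm_cancel)
    have tel: "u n x = u 0 x + (\<Sum>i<n. a i)" for n
      unfolding a_def by (induction n) auto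
    define L where "L = u 0 x + suminf a"
    have "(\<lambda>n. u 0 x + (\<Sum>i<n. a i)) \<longlonglongrightarrow> L"
      unfolding L_def by (intro tendsto_add tendsto_const summable_LIMSEQ sa')
    moreover have "(\<lambda>n. u n x) = (\<lambda>n. u 0 x + (\<Sum>i<n. a i))" by (rule ext) (rule tel)
    ultimately have lim: "(\<lambda>n. u n x) \<longlonglongrightarrow> L" by simp
    have bnd: "norm (L - u n x) \<le> C * \<tau> ^ n / (1 - \<tau>)" for n
    proof -
      have "L - u n x = (\<Sum>i. a (i + n))"
        using suminf_split_initial_segment[OF sa', of n] tel[of n] by (simp add: L_def)
      also have "norm \<dots> \<le> (\<Sum>i. norm (a (i + n)))"
        by (rule summable_norm) (use sa summable_iff_shift[of "\<lambda>i. norm (a i)" n] in simp)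
      also have "\<dots> \<le> (\<Sum>i. C * \<tau> ^ n * \<tau> ^ i)"
      proof (rule suminf_le)
        show "norm (a (i + n)) \<le> C * \<tau> ^ n * \<tau> ^ i" for i
          using d[of "i + n" x] by (simp add: a_def power_add mult_ac)
        show "summable (\<lambda>i. norm (a (i + n)))" using sa summable_iff_shift[of "\<lambda>i. norm (a i)" n] by simp
        show "summable (\<lambda>i. C * \<tau> ^ n * \<tau> ^ i)" using t by (intro summable_mult summable_geometric) auto
      qed
      also have "\<dots> = C * \<tau> ^ n / (1 - \<tau>)"
        using suminf_mult[of "\<lambda>i. \<tau> ^ i" "C * \<tau> ^ n"] suminf_geometric[of \<tau>] t summable_geometric[of \<tau>]
        by (simp add: divide_inverse)
      finally show ?thesis .
    qed
    show ?thesis using lim bnd by blast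
  qed
  then show ?thesis by metis
qed

lemma isCont_unif_limit:
  fixes u :: "nat \<Rightarrow> real \<Rightarrow> complex"
  assumes c: "\<And>n. isCont (u n) x" and b: "\<And>n y. norm (U y - u n y) \<le> C * \<tau> ^ n"
    and t: "0 \<le> \<tau>" "\<tau> < 1"
  shows "isCont U x"
proof -
  have ul: "uniform_limit UNIV u U sequentially"
    unfolding uniform_limit_iff
  proof (intro allI impI)
    fix e :: real assume e: "e > 0"
    have "(\<lambda>n. C * \<tau> ^ n) \<longlonglongrightarrow> C * 0"
      by (intro tendsto_mult tendsto_const LIMSEQ_power_zero) (use t in auto)
    then have "eventually (\<lambda>n. dist (C * \<tau> ^ n) 0 < e) sequentially"
      using e by (simp add: tendsto_iff)
    then show "\<forall>\<^sub>F n in sequentially. \<forall>y\<in>UNIV. dist (u n y) (U y) < e"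
    proof eventually_elim
      case (elim n)
      show ?case
      proof
        fix y
        have "dist (u n y) (U y) \<le> C * \<tau> ^ n" using b[of y n] by (simp add: dist_norm norm_minus_commute)
        also have "\<dots> < e" using elim by (auto simp: dist_real_def)
        finally show "dist (u n y) (U y) < e" .
      qed
    qed
  qed
  have lim: "(\<lambda>n. u n x) \<longlonglongrightarrow> U x"
    by (rule geom_tendsto[of _ _ C \<tau>]) (use b t in \<open>auto simp: norm_minus_commute\<close>)
  have "\<forall>\<^sub>F n in sequentially. (u n \<longlongrightarrow> u n x) (at x within UNIV)"
    using c by (simp add: isCont_def)
  from swap_uniform_limit[OF this lim ul] show ?thesis by (simp add: isCont_def)
qed

definition Tp :: "(real \<Rightarrow> complex) \<Rightarrow> complex \<Rightarrow> (real \<Rightarrow> complex) \<Rightarrow> real \<Rightarrow> complex" where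
  "Tp H s g = Per (\<lambda>r. of_real (psi r) * (H r + Z False s g r))"

lemma Per_two_bound:
  fixes Q :: "real \<Rightarrow> complex"
  assumes Q: "\<And>r. r = x - of_int \<lfloor>x\<rfloor> \<or> r = x - of_int \<lfloor>x\<rfloor> - 1 \<Longrightarrow>
       norm (Q r) \<le> a + psi r * b + psi r * \<bar>r\<bar> powr c * e"
    and e: "e \<ge> 0" and c: "c > 0"
  shows "norm (Per Q x) \<le> 2 * a + b + rho c * e"
proof -
  define t where "t = x - of_int \<lfloor>x\<rfloor>"
  have t: "0 \<le> t" "t < 1" unfolding t_def by (auto, linarith)
  have q1: "norm (Q t) \<le> a + psi t * b + psi t * \<bar>t\<bar> powr c * e" by (rule Q) (simp add: t_def)
  have q2: "norm (Q (t - 1)) \<le> a + psi (t - 1) * b + psi (t - 1) * \<bar>t - 1\<bar> powr c * e" by (rule Q) (simp add: t_def)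
  have "norm (Per Q x) \<le> norm (Q t) + norm (Q (t - 1))"
    using Per_norm[of Q x] by (simp add: t_def)
  also have "\<dots> \<le> (a + psi t * b + psi t * \<bar>t\<bar> powr c * e) + (a + psi (t - 1) * b + psi (t - 1) * \<bar>t - 1\<bar> powr c * e)"
    using q1 q2 by (rule add_mono)
  also have "\<dots> = 2 * a + (psi t + psi (t - 1)) * b + (psi t * \<bar>t\<bar> powr c + psi (t - 1) * \<bar>t - 1\<bar> powr c) * e"
    by (simp add: algebra_simps)
  also have "\<dots> \<le> 2 * a + b + rho c * e"
    using psi_sum[OF t] mult_right_mono[OF psi_rho[OF c t] e] by simp
  finally show ?thesis .
qed

lemma Z_norm_pt:
  assumes "r \<noteq> 0 \<Longrightarrow> norm (g (- 1 / r)) \<le> B"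
  shows "norm (Z e s g r) \<le> \<bar>r\<bar> powr Re s * B"
  using assms by (cases "r = 0") (auto simp: Z_def norm_mult norm_Ee norm_Wt intro!: mult_left_mono)

lemma frac_cases:
  assumes "r = x - of_int \<lfloor>x\<rfloor> \<or> r = x - of_int \<lfloor>x\<rfloor> - 1"
  shows "\<exists>n::int. r = x - of_int n"
  using assms by (metis of_int_1 of_int_add diff_diff_eq)

lemma Tp_bound:
  assumes s: "Re s > 0" and A: "\<And>r. \<bar>r\<bar> < 1 \<Longrightarrow> norm (H r) \<le> A" and B: "B \<ge> 0"
    and g: "\<And>n::int. 0 < \<bar>x - of_int n\<bar> \<Longrightarrow> \<bar>x - of_int n\<bar> < 1 \<Longrightarrow> norm (g (- 1 / (x - of_int n))) \<le> B"
  shows "norm (Tp H s g x) \<le> A + rho (Re s) * B"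
proof -
  have "norm (Tp H s g x) \<le> 2 * 0 + A + rho (Re s) * B"
    unfolding Tp_def
  proof (rule Per_two_bound[OF _ B s])
    fix r assume r: "r = x - of_int \<lfloor>x\<rfloor> \<or> r = x - of_int \<lfloor>x\<rfloor> - 1"
    then obtain n :: int where n: "r = x - of_int n" using frac_cases by blast
    show "norm (of_real (psi r) * (H r + Z False s g r)) \<le> 0 + psi r * A + psi r * \<bar>r\<bar> powr Re s * B"
    proof (cases "\<bar>r\<bar> < 1")
      case True
      have z: "norm (Z False s g r) \<le> \<bar>r\<bar> powr Re s * B"
        by (rule Z_norm_pt) (use g n True in auto)
      have "norm (of_real (psi r) * (H r + Z False s g r)) = psi r * norm (H r + Z False s g r)"
        by (simp add: norm_mult psi_nonneg)
      also have "\<dots> \<le> psi r * (A + \<bar>r\<bar> powr Re s * B)"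
        using A[OF True] z by (intro mult_left_mono psi_nonneg order.trans[OF norm_triangle_ineq] add_mono) auto
      finally show ?thesis by (simp add: algebra_simps)
    next
      case False
      then show ?thesis by (simp add: psi_out)
    qed
  qed
  then show ?thesis by simp
qed

lemma Tp_diff: "Tp H s g1 x - Tp H s g2 x = Tp (\<lambda>_. 0) s (\<lambda>y. g1 y - g2 y) x"
  unfolding Tp_def Per_def Z_diff by (simp add: algebra_simps)

lemma Tp_contr:
  assumes s: "Re s > 0" and B: "B \<ge> 0"
    and g: "\<And>n::int. 0 < \<bar>x - of_int n\<bar> \<Longrightarrow> \<bar>x - of_int n\<bar> < 1 \<Longrightarrow>
       norm (g1 (- 1 / (x - of_int n)) - g2 (- 1 / (x - of_int n))) \<le> B"
  shows "norm (Tp H s g1 x - Tp H s g2 x) \<le> rho (Re s) * B"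
  using Tp_bound[of s "\<lambda>_. 0" 0 B x "\<lambda>y. g1 y - g2 y"] assms by (simp add: Tp_diff)

lemma Tp_periodic: "Tp H s g (x + 1) = Tp H s g x"
  by (simp add: Tp_def Per_periodic)

lemma rho_nonneg: "0 \<le> rho a" using rho_pos[of a] by simp

lemma inv_irrat: "r \<notin> \<rat> \<Longrightarrow> - 1 / r \<notin> \<rat>"
proof
  assume r: "r \<notin> \<rat>" and q: "- 1 / r \<in> \<rat>"
  have "r \<noteq> 0" using r by auto
  then have "r = - 1 / (- 1 / r)" by simp
  also have "\<dots> \<in> \<rat>" by (rule Rats_divide) (use q in auto)
  finally show False using r by simp
qed

section \<open>Existence of a fixed point, continuous at irrationals\<close>

lemma fixed_point_exists:
  assumes s: "Re s > 0" and A: "\<And>r. \<bar>r\<bar> < 1 \<Longrightarrow> norm (H r) \<le> A"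
    and Hc: "\<And>r. \<bar>r\<bar> < 1 \<Longrightarrow> r \<notin> \<rat> \<Longrightarrow> isCont H r"
  shows "\<exists>F. (\<forall>x. F x = Tp H s F x) \<and> (\<exists>B. \<forall>x. norm (F x) \<le> B) \<and> (\<forall>x. x \<notin> \<rat> \<longrightarrow> isCont F x)"
proof -
  define \<rho> where "\<rho> = rho (Re s)"
  have \<rho>: "0 \<le> \<rho>" "\<rho> < 1" using rho_nonneg rho_lt1 s by (auto simp: \<rho>_def)
  have A0: "A \<ge> 0"
  proof -
    have "norm (H 0) \<le> A" using A[of 0] by simp
    then show ?thesis using norm_ge_zero[of "H 0"] by linarith
  qed
  define M where "M = A / (1 - \<rho>)"
  have M0: "M \<ge> 0" using A0 \<rho> by (simp add: M_def)
  have AM: "A + \<rho> * M = M" using \<rho> by (simp add: M_def field_simps)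
  define u where "u n = ((Tp H s) ^^ n) (\<lambda>_. 0)" for n
  have uS: "u (Suc n) = Tp H s (u n)" for n by (simp add: u_def)
  have ub: "norm (u n x) \<le> M" for n x
  proof (induction n arbitrary: x)
    case 0 then show ?case using M0 by (simp add: u_def)
  next
    case (Suc n)
    have "norm (u (Suc n) x) \<le> A + \<rho> * M"
      unfolding uS \<rho>_def by (rule Tp_bound[OF s A M0]) (use Suc in auto)
    then show ?case using AM by simp
  qed
  have ud: "norm (u (Suc n) x - u n x) \<le> M * \<rho> ^ n" for n x
  proof (induction n arbitrary: x)
    case 0 then show ?case using ub[of 1 x] by (simp add: u_def)
  next
    case (Suc n)
    have e: "u (Suc (Suc n)) x - u (Suc n) x = Tp H s (u (Suc n)) x - Tp H s (u n) x"
      by (simp add: u_def)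
    have "norm (Tp H s (u (Suc n)) x - Tp H s (u n) x) \<le> \<rho> * (M * \<rho> ^ n)"
      unfolding \<rho>_def
      by (rule Tp_contr[OF s]) (use Suc.IH M0 \<rho> in \<open>auto simp: \<rho>_def\<close>)
    then have "norm (u (Suc (Suc n)) x - u (Suc n) x) \<le> \<rho> * (M * \<rho> ^ n)" using e by simp
    then show ?case by (simp add: mult_ac)
  qed
  obtain U where U: "\<And>x. (\<lambda>n. u n x) \<longlonglongrightarrow> U x" "\<And>x n. norm (U x - u n x) \<le> M * \<rho> ^ n / (1 - \<rho>)"
    using geom_limit[where u=u and C=M and \<tau>=\<rho>, OF ud \<rho>] by blast
  have fixU: "U x = Tp H s U x" for x
  proof -
    have "norm (Tp H s U x - U x) \<le> (2 * (M / (1 - \<rho>))) * \<rho> ^ n" for n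
    proof -
      have "norm (Tp H s U x - u (Suc n) x) \<le> \<rho> * (M * \<rho> ^ n / (1 - \<rho>))"
        unfolding uS \<rho>_def by (rule Tp_contr[OF s]) (use U(2) M0 \<rho> in \<open>auto simp: \<rho>_def\<close>)
      also have "\<dots> \<le> M * \<rho> ^ n / (1 - \<rho>)"
        using \<rho> M0 by (intro mult_left_le_one_le) auto
      finally have 1: "norm (Tp H s U x - u (Suc n) x) \<le> M * \<rho> ^ n / (1 - \<rho>)" .
      have 2: "norm (u (Suc n) x - U x) \<le> M * \<rho> ^ n / (1 - \<rho>)"
      proof -
        have "norm (U x - u (Suc n) x) \<le> M * \<rho> ^ Suc n / (1 - \<rho>)" by (rule U(2))
        also have "\<dots> \<le> M * \<rho> ^ n / (1 - \<rho>)"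
          using \<rho> M0 by (intro divide_right_mono mult_left_mono power_decreasing) auto
        finally show ?thesis by (simp add: norm_minus_commute)
      qed
      have "norm (Tp H s U x - U x) \<le> norm (Tp H s U x - u (Suc n) x) + norm (u (Suc n) x - U x)"
        using norm_triangle_ineq[of "Tp H s U x - u (Suc n) x" "u (Suc n) x - U x"] by simp
      also have "\<dots> \<le> 2 * (M / (1 - \<rho>)) * \<rho> ^ n" using 1 2 by simp
      finally show ?thesis .
    qed
    then have "norm (Tp H s U x - U x) \<le> 0" by (rule le_geom_zero) (use \<rho> in auto)
    then show ?thesis by simp
  qed
  have bnd: "norm (U x) \<le> M / (1 - \<rho>)" for x
    using U(2)[of x 0] by (simp add: u_def)
  have cont: "isCont (u n) x" if "x \<notin> \<rat>" for n x
    using that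
  proof (induction n arbitrary: x)
    case 0 then show ?case by (simp add: u_def)
  next
    case (Suc n)
    show ?case unfolding uS Tp_def
    proof (rule Per_isCont)
      show "of_real (psi r) * (H r + Z False s (u n) r) = 0" if "\<bar>r\<bar> \<ge> 1" for r
        using that by (simp add: psi_out)
      fix m :: int
      define r where "r = x - of_int m"
      have rQ: "r \<notin> \<rat>" using Suc(2) unfolding r_def
        by (metis Rats_add Rats_of_int diff_add_cancel)
      then have r0: "r \<noteq> 0" by auto
      consider "\<bar>r\<bar> < 1" | "\<bar>r\<bar> > 1" | "\<bar>r\<bar> = 1" by linarith
      then show "isCont (\<lambda>r. of_real (psi r) * (H r + Z False s (u n) r)) (x - of_int m)"
      proof cases
        case 1
        have "- 1 / r \<notin> \<rat>" using rQ r0 inv_irrat by blast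
        then have "isCont (u n) (- 1 / r)" by (rule Suc.IH)
        then have "isCont (Z False s (u n)) r" using Z_isCont r0 by blast
        then show ?thesis unfolding r_def[symmetric]
          using Hc[OF 1 rQ] psi_isCont by (intro continuous_intros) (auto intro: isCont_o2[where g=of_real])
      next
        case 2
        have "eventually (\<lambda>y. y \<in> {y. \<bar>y\<bar> > 1}) (nhds r)" using 2
          by (intro eventually_nhds_in_open open_abs_gt1) auto
        then have "eventually (\<lambda>y. 0 = of_real (psi y) * (H y + Z False s (u n) y)) (nhds r)"
          by eventually_elim (auto simp: psi_out)
        then show ?thesis unfolding r_def[symmetric] using isCont_cong continuous_const by fastforce
      next
        case 3
        then have "r \<in> \<rat>" by (metis Rats_1 Rats_minus_iff abs_if)
        then show ?thesis using rQ by blast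
      qed
    qed
  qed
  have "isCont U x" if "x \<notin> \<rat>" for x
  proof (rule isCont_unif_limit[OF cont[OF that] _ \<rho>])
    show "norm (U y - u n y) \<le> (M / (1 - \<rho>)) * \<rho> ^ n" for n y
      using U(2)[of y n] by (simp add: divide_inverse mult_ac)
  qed
  then show ?thesis using fixU bnd by blast
qed



lemma interior_deriv:
  fixes H H' :: "real \<Rightarrow> complex"
  assumes dH: "\<And>x. x \<in> {-1..1} \<Longrightarrow> (H has_vector_derivative H' x) (at x within {-1..1})"
    and r: "\<bar>r\<bar> < 1"
  shows "(H has_vector_derivative H' r) (at r)"
proof -
  have "(H has_vector_derivative H' r) (at r within {-1<..<1})"
    by (rule has_vector_derivative_within_subset[OF dH]) (use r in auto)
  moreover have "at r within {-1<..<1} = at r" using r by (intro at_within_open) auto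
  ultimately show ?thesis by simp
qed

lemma interior_cont:
  fixes H' :: "real \<Rightarrow> complex"
  assumes "continuous_on {-1..1} H'" "\<bar>r\<bar> < 1"
  shows "isCont H' r"
proof -
  have "continuous_on {-1<..<1} H'" by (rule continuous_on_subset[OF assms(1)]) auto
  then show ?thesis using continuous_on_eq_continuous_at[of "{-1<..<1}" H'] assms(2) by (auto simp: abs_less_iff)
qed

definition Ug :: "(real \<Rightarrow> complex) \<Rightarrow> complex \<Rightarrow> (real \<Rightarrow> complex) \<Rightarrow> real \<Rightarrow> complex" where
  "Ug H s g r = H r + Z False s g r"

definition Ud :: "(real \<Rightarrow> complex) \<Rightarrow> complex \<Rightarrow> (real \<Rightarrow> complex) \<Rightarrow> (real \<Rightarrow> complex) \<Rightarrow> real \<Rightarrow> complex" where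
  "Ud H' s g d r = H' r + s * Z True (s - 1) g r + Z False (s - 2) d r"

definition Sd :: "(real \<Rightarrow> complex) \<Rightarrow> (real \<Rightarrow> complex) \<Rightarrow> complex \<Rightarrow> (real \<Rightarrow> complex) \<Rightarrow> (real \<Rightarrow> complex) \<Rightarrow> real \<Rightarrow> complex" where
  "Sd H H' s g d = Per (\<lambda>r. of_real (psi' r) * Ug H s g r + of_real (psi r) * Ud H' s g d r)"

lemma Tp_Ug: "Tp H s g = Per (\<lambda>r. of_real (psi r) * Ug H s g r)"
  by (simp add: Tp_def Ug_def)

lemma Z_le_B:
  assumes "\<bar>r\<bar> \<le> 1" "Re s \<ge> 0" "\<And>y. norm (g y) \<le> B"
  shows "norm (Z e s g r) \<le> B"
proof -
  have B: "B \<ge> 0" using assms(3)[of 0] norm_ge_zero[of "g 0"] by linarith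
  have "norm (Z e s g r) \<le> \<bar>r\<bar> powr Re s * B" by (rule Z_norm_le) (rule assms(3))
  also have "\<dots> \<le> 1 * B" using assms B by (intro mult_right_mono powr_le1) auto
  finally show ?thesis by simp
qed

lemma step_lemma:
  assumes s: "Re s > 2"
    and dH: "\<And>x. x \<in> {-1..1} \<Longrightarrow> (H has_vector_derivative H' x) (at x within {-1..1})"
    and cH': "continuous_on {-1..1} H'"
    and MH: "\<And>r. \<bar>r\<bar> \<le> 1 \<Longrightarrow> norm (H r) \<le> MH" and MH': "\<And>r. \<bar>r\<bar> \<le> 1 \<Longrightarrow> norm (H' r) \<le> MH'"
    and dg: "\<And>x. (g has_vector_derivative d x) (at x)" and cd: "\<And>x. isCont d x"
    and Bg: "\<And>x. norm (g x) \<le> Bg" and Bd: "\<And>x. norm (d x) \<le> Bd"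
  shows "(Tp H s g has_vector_derivative Sd H H' s g d x) (at x)"
    and "isCont (Sd H H' s g d) x"
    and "\<forall>y. norm (Sd H H' s g d y) \<le> pi * (MH + Bg) + (MH' + norm s * Bg + Bd)"
proof -
  have Bg0: "Bg \<ge> 0" using Bg[of 0] norm_ge_zero[of "g 0"] by linarith
  have Bd0: "Bd \<ge> 0" using Bd[of 0] norm_ge_zero[of "d 0"] by linarith
  have MH0: "MH \<ge> 0"
  proof -
    have "norm (H 0) \<le> MH" using MH[of 0] by simp
    then show ?thesis using norm_ge_zero[of "H 0"] by linarith
  qed
  have MH'0: "MH' \<ge> 0"
  proof -
    have "norm (H' 0) \<le> MH'" using MH'[of 0] by simp
    then show ?thesis using norm_ge_zero[of "H' 0"] by linarith
  qed
  define MU where "MU = MH + Bg"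
  define MUd where "MUd = MH' + norm s * Bg + Bd"
  have MU0: "MU \<ge> 0" "MUd \<ge> 0" using Bg0 Bd0 MH0 MH'0 by (auto simp: MU_def MUd_def)
  have cg: "isCont g x" for x using dg has_vector_derivative_continuous by blast
  have bU: "norm (Ug H s g r) \<le> MU" if "\<bar>r\<bar> \<le> 1" for r
  proof -
    have "norm (Ug H s g r) \<le> norm (H r) + norm (Z False s g r)" unfolding Ug_def by (rule norm_triangle_ineq)
    also have "\<dots> \<le> MH + Bg" using MH[OF that] Z_le_B[OF that _ Bg] s by (intro add_mono) auto
    finally show ?thesis by (simp add: MU_def)
  qed
  have bUd: "norm (Ud H' s g d r) \<le> MUd" if "\<bar>r\<bar> \<le> 1" for r
  proof -
    have "norm (Ud H' s g d r) \<le> norm (H' r) + norm (s * Z True (s - 1) g r) + norm (Z False (s - 2) d r)"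
      unfolding Ud_def by (meson norm_triangle_ineq order.trans add_mono order.refl)
    also have "\<dots> \<le> MH' + norm s * Bg + Bd"
      using MH'[OF that] Z_le_B[OF that _ Bg, of "s - 1" True] Z_le_B[OF that _ Bd, of "s - 2" False] s
      by (intro add_mono) (auto simp: norm_mult intro!: mult_left_mono)
    finally show ?thesis by (simp add: MUd_def)
  qed
  define Q where "Q r = of_real (psi r) * Ug H s g r" for r
  define Q' where "Q' r = of_real (psi' r) * Ug H s g r + of_real (psi r) * Ud H' s g d r" for r
  have supp: "Q r = 0" "Q' r = 0" if "\<bar>r\<bar> \<ge> 1" for r
    using that by (auto simp: Q_def Q'_def psi_out psi'_out)
  have Qquad: "norm (Q y) \<le> (pi / 2)\<^sup>2 * (y - r)\<^sup>2 * MU" if r: "\<bar>r\<bar> = 1" for y r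
  proof (cases "\<bar>y\<bar> \<le> 1")
    case True
    have "norm (Q y) = psi y * norm (Ug H s g y)" by (simp add: Q_def norm_mult psi_nonneg)
    also have "\<dots> \<le> (pi / 2)\<^sup>2 * (y - r)\<^sup>2 * MU"
      using psi_quad[OF r, of y] bU[OF True] psi_nonneg[of y] by (intro mult_mono) auto
    finally show ?thesis .
  next
    case False then show ?thesis using supp[of y] MU0 by simp
  qed
  have Q'lin: "norm (Q' y) \<le> pi\<^sup>2 / 2 * \<bar>y - r\<bar> * MU + (pi / 2)\<^sup>2 * (y - r)\<^sup>2 * MUd" if r: "\<bar>r\<bar> = 1" for y r
  proof (cases "\<bar>y\<bar> \<le> 1")
    case True
    have "norm (Q' y) \<le> \<bar>psi' y\<bar> * norm (Ug H s g y) + psi y * norm (Ud H' s g d y)"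
      unfolding Q'_def by (rule order.trans[OF norm_triangle_ineq]) (simp add: norm_mult psi_nonneg)
    also have "\<dots> \<le> pi\<^sup>2 / 2 * \<bar>y - r\<bar> * MU + (pi / 2)\<^sup>2 * (y - r)\<^sup>2 * MUd"
      using psi'_lin[OF r, of y] psi_quad[OF r, of y] bU[OF True] bUd[OF True] psi_nonneg[of y]
      by (intro add_mono mult_mono) auto
    finally show ?thesis .
  next
    case False then show ?thesis using supp[of y] MU0 by simp
  qed
  have dQ: "(Q has_vector_derivative Q' r) (at r)" for r
  proof -
    consider "\<bar>r\<bar> < 1" | "\<bar>r\<bar> > 1" | "\<bar>r\<bar> = 1" by linarith
    then show ?thesis
    proof cases
      case 1
      have dpsi: "((\<lambda>r. complex_of_real (psi r)) has_vector_derivative of_real (psi' r)) (at r)"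
        by (rule has_vector_derivative_of_real[OF psi_deriv])
      have dZ: "(Z False s g has_vector_derivative (s * Z True (s - 1) g r + Z False (s - 2) d r)) (at r)"
        using Z_deriv_all[of s g Bg d False r] s Bg dg by auto
      have dU: "(Ug H s g has_vector_derivative Ud H' s g d r) (at r)"
        using has_vector_derivative_add[OF interior_deriv[OF dH 1] dZ]
        unfolding Ug_def[abs_def] Ud_def by (simp add: add.assoc)
      show ?thesis
        using has_vector_derivative_mult[OF dpsi dU] unfolding Q_def[abs_def] Q'_def
        by (simp add: add.commute)
    next
      case 2
      have "((\<lambda>r. 0) has_vector_derivative Q' r) (at r)" using supp[of r] 2 by simp
      then show ?thesis
        by (rule has_vector_derivative_transform_within_open[where S="{r. \<bar>r\<bar> > 1}"])
           (use 2 open_abs_gt1 supp in auto)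
    next
      case 3
      have "(Q has_vector_derivative 0) (at r within UNIV)"
      proof (rule deriv_zero_by_norm)
        show "Q r = 0" using supp 3 by simp
        show "((\<lambda>y. norm (Q y) / \<bar>y - r\<bar>) \<longlongrightarrow> 0) (at r within UNIV)"
        proof (rule Lim_null_comparison)
          have "norm (norm (Q y) / \<bar>y - r\<bar>) \<le> (pi / 2)\<^sup>2 * MU * \<bar>y - r\<bar>" if "y \<noteq> r" for y
          proof -
            have "norm (Q y) \<le> \<bar>y - r\<bar> * ((pi / 2)\<^sup>2 * MU * \<bar>y - r\<bar>)"
              using Qquad[OF 3, of y] by (simp add: power2_eq_square abs_mult_self_eq mult_ac)
            then show ?thesis using that by (simp add: divide_le_eq mult_ac)
          qed
          then show "\<forall>\<^sub>F y in at r within UNIV. norm (norm (Q y) / \<bar>y - r\<bar>) \<le> (pi / 2)\<^sup>2 * MU * \<bar>y - r\<bar>"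
            by (auto simp: eventually_at_filter)
          show "((\<lambda>y. (pi / 2)\<^sup>2 * MU * \<bar>y - r\<bar>) \<longlongrightarrow> 0) (at r within UNIV)"
            by (auto intro!: tendsto_eq_intros)
        qed
      qed
      then show ?thesis using supp(2)[of r] 3 by simp
    qed
  qed
  have cQ': "isCont Q' r" for r
  proof -
    consider "\<bar>r\<bar> < 1" | "\<bar>r\<bar> > 1" | "\<bar>r\<bar> = 1" by linarith
    then show ?thesis
    proof cases
      case 1
      have cH: "isCont H r" using interior_deriv[OF dH 1] has_vector_derivative_continuous by blast
      have c1: "isCont (Z False s g) r" by (rule Z_isCont_all[of s g Bg]) (use s Bg cg in auto)
      have c2: "isCont (Z True (s - 1) g) r" by (rule Z_isCont_all[of "s - 1" g Bg]) (use s Bg cg in auto)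
      have c3: "isCont (Z False (s - 2) d) r" by (rule Z_isCont_all[of "s - 2" d Bd]) (use s Bd cd in auto)
      have cH': "isCont H' r" using interior_cont[OF cH' 1] .
      show ?thesis unfolding Q'_def[abs_def] Ug_def Ud_def
        using cH c1 c2 c3 cH' psi_isCont psi'_isCont by (intro continuous_intros) auto
    next
      case 2
      have "eventually (\<lambda>y. y \<in> {y. \<bar>y\<bar> > 1}) (nhds r)" using 2
        by (intro eventually_nhds_in_open open_abs_gt1) auto
      then have "eventually (\<lambda>y. 0 = Q' y) (nhds r)"
        by eventually_elim (use supp in auto)
      then show ?thesis using isCont_cong continuous_const by fastforce
    next
      case 3
      have "(Q' \<longlongrightarrow> 0) (at r)"
      proof (rule Lim_null_comparison)
        show "\<forall>\<^sub>F y in at r. norm (Q' y) \<le> pi\<^sup>2 / 2 * \<bar>y - r\<bar> * MU + (pi / 2)\<^sup>2 * (y - r)\<^sup>2 * MUd"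
          using Q'lin[OF 3] by auto
        show "((\<lambda>y. pi\<^sup>2 / 2 * \<bar>y - r\<bar> * MU + (pi / 2)\<^sup>2 * (y - r)\<^sup>2 * MUd) \<longlongrightarrow> 0) (at r)"
          by (auto intro!: tendsto_eq_intros)
      qed
      then show ?thesis using supp(2)[of r] 3 by (simp add: isCont_def)
    qed
  qed
  show "(Tp H s g has_vector_derivative Sd H H' s g d x) (at x)"
    unfolding Tp_Ug Sd_def using Per_deriv[of Q Q' x] supp dQ unfolding Q_def[abs_def] Q'_def[abs_def] by blast
  show "isCont (Sd H H' s g d) x"
    unfolding Sd_def using Per_isCont[of Q' x] supp cQ' unfolding Q'_def[abs_def] by blast
  show "\<forall>y. norm (Sd H H' s g d y) \<le> pi * (MH + Bg) + (MH' + norm s * Bg + Bd)"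
  proof
    fix y
    have "norm (Per Q' y) \<le> 2 * (pi / 2 * MU) + MUd + rho (Re s) * 0"
    proof (rule Per_two_bound)
      fix r
      show "norm (Q' r) \<le> pi / 2 * MU + psi r * MUd + psi r * \<bar>r\<bar> powr Re s * 0"
      proof (cases "\<bar>r\<bar> < 1")
        case True
        have "norm (Q' r) \<le> \<bar>psi' r\<bar> * norm (Ug H s g r) + psi r * norm (Ud H' s g d r)"
          unfolding Q'_def by (rule order.trans[OF norm_triangle_ineq]) (simp add: norm_mult psi_nonneg)
        also have "\<dots> \<le> pi / 2 * MU + psi r * MUd"
          using psi'_bound[of r] bU[of r] bUd[of r] True psi_nonneg[of r] MU0
          by (intro add_mono mult_mono mult_left_mono) auto
        finally show ?thesis by simp
      next
        case False then show ?thesis using supp(2)[of r] MU0 psi_out[of r] by simp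
      qed
    qed (use s in auto)
    then show "norm (Sd H H' s g d y) \<le> pi * (MH + Bg) + (MH' + norm s * Bg + Bd)"
      unfolding Sd_def Q'_def[abs_def] MU_def MUd_def by simp
  qed
qed


lemma Sd_diff:
  assumes s: "Re s > 2" and dg: "\<And>y. norm (g1 y - g2 y) \<le> \<delta>g" and dd: "\<And>y. norm (d1 y - d2 y) \<le> \<delta>d"
  shows "norm (Sd H H' s g1 d1 x - Sd H H' s g2 d2 x) \<le> (pi + norm s) * \<delta>g + rho (Re s - 2) * \<delta>d"
proof -
  have dg0: "\<delta>g \<ge> 0" using dg[of 0] norm_ge_zero order.trans by blast
  have dd0: "\<delta>d \<ge> 0" using dd[of 0] norm_ge_zero order.trans by blast
  define G where "G y = g1 y - g2 y" for y
  define D where "D y = d1 y - d2 y" for y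
  define Q where "Q r = of_real (psi' r) * Z False s G r + of_real (psi r) * (s * Z True (s - 1) G r + Z False (s - 2) D r)" for r
  have eq: "Sd H H' s g1 d1 x - Sd H H' s g2 d2 x = Per Q x"
    unfolding Sd_def Per_def Ug_def Ud_def Q_def G_def D_def Z_diff by (simp add: algebra_simps)
  have "norm (Per Q x) \<le> 2 * (pi / 2 * \<delta>g) + norm s * \<delta>g + rho (Re s - 2) * \<delta>d"
  proof (rule Per_two_bound)
    fix r
    show "norm (Q r) \<le> pi / 2 * \<delta>g + psi r * (norm s * \<delta>g) + psi r * \<bar>r\<bar> powr (Re s - 2) * \<delta>d"
    proof (cases "\<bar>r\<bar> < 1")
      case True
      have z1: "norm (Z False s G r) \<le> \<delta>g" by (rule Z_le_B) (use True s dg in \<open>auto simp: G_def\<close>)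
      have z2: "norm (Z True (s - 1) G r) \<le> \<delta>g" by (rule Z_le_B) (use True s dg in \<open>auto simp: G_def\<close>)
      have z3: "norm (Z False (s - 2) D r) \<le> \<bar>r\<bar> powr Re (s - 2) * \<delta>d" by (rule Z_norm_le) (use dd in \<open>auto simp: D_def\<close>)
      have "norm (Q r) \<le> \<bar>psi' r\<bar> * norm (Z False s G r) + psi r * (norm s * norm (Z True (s - 1) G r) + norm (Z False (s - 2) D r))"
        unfolding Q_def
        by (rule order.trans[OF norm_triangle_ineq])
           (auto simp: norm_mult psi_nonneg intro!: add_mono mult_left_mono order.trans[OF norm_triangle_ineq])
      also have "\<dots> \<le> pi / 2 * \<delta>g + psi r * (norm s * \<delta>g + \<bar>r\<bar> powr (Re s - 2) * \<delta>d)"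
        using psi'_bound[of r] z1 z2 z3 psi_nonneg[of r] dg0
        by (intro add_mono mult_mono mult_left_mono) auto
      finally show ?thesis by (simp add: algebra_simps)
    next
      case False then show ?thesis using psi_out[of r] psi'_out[of r] dg0 by (simp add: Q_def)
    qed
  qed (use dd0 s in auto)
  then show ?thesis using eq by (simp add: algebra_simps)
qed

lemma Tp_fix:
  assumes pF: "\<And>x. F (x + 1) = F x" and eq: "\<And>r. \<bar>r\<bar> < 1 \<Longrightarrow> F r = H r + Z False s F r"
  shows "Tp H s F x = F x"
proof -
  define t where "t = x - of_int \<lfloor>x\<rfloor>"
  have t: "0 \<le> t" "t < 1" unfolding t_def by (auto, linarith)
  have Ft: "F t = F x" unfolding t_def by (rule per_floor[where F=F, OF pF])
  have Ft1: "F (t - 1) = F x" using pF[of "t - 1"] Ft by simp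
  have trm: "of_real (psi r) * (H r + Z False s F r) = of_real (psi r) * F x" if "F r = F x" for r
    using that eq[of r] psi_out[of r] by (cases "\<bar>r\<bar> < 1") auto
  have "Tp H s F x = of_real (psi t) * (H t + Z False s F t) + of_real (psi (t - 1)) * (H (t - 1) + Z False s F (t - 1))"
    by (simp add: Tp_def Per_def t_def)
  also have "\<dots> = of_real (psi t) * F x + of_real (psi (t - 1)) * F x"
    by (simp only: trm[OF Ft] trm[OF Ft1])
  also have "\<dots> = of_real (psi t + psi (t - 1)) * F x" by (simp add: algebra_simps)
  also have "\<dots> = F x" using psi_sum[OF t] by simp
  finally show ?thesis .
qed

lemma C1_lemma:
  fixes s :: complex and H H' F :: "real \<Rightarrow> complex"
  assumes s: "Re s > 2"
    and dH: "\<And>x. x \<in> {-1..1} \<Longrightarrow> (H has_vector_derivative H' x) (at x within {-1..1})"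
    and cH': "continuous_on {-1..1} H'"
    and cF: "\<And>x. isCont F x" and pF: "\<And>x. F (x + 1) = F x"
    and eq: "\<And>x. x \<in> {-1..1} \<Longrightarrow> F x = H x + Z False s F x"
  shows "\<exists>G. (\<forall>x. isCont G x) \<and> (\<forall>x. (F has_vector_derivative G x) (at x))"
proof -
  have cH: "continuous_on {-1..1} H"
    using dH has_vector_derivative_continuous continuous_on_eq_continuous_within by blast
  obtain MH where MH: "\<And>r. r \<in> {-1..1} \<Longrightarrow> norm (H r) \<le> MH" using cont_bounded_compact[OF cH compact_Icc] by blast
  obtain MH' where MH': "\<And>r. r \<in> {-1..1} \<Longrightarrow> norm (H' r) \<le> MH'" using cont_bounded_compact[OF cH' compact_Icc] by blast
  have MHa: "\<And>r. \<bar>r\<bar> \<le> 1 \<Longrightarrow> norm (H r) \<le> MH" using MH by (auto simp: abs_le_iff)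
  have MH'a: "\<And>r. \<bar>r\<bar> \<le> 1 \<Longrightarrow> norm (H' r) \<le> MH'" using MH' by (auto simp: abs_le_iff)
  obtain BF where BF: "\<And>x. norm (F x) \<le> BF"
    using per_bounded[of F] pF cF continuous_at_imp_continuous_on by blast
  have eq1: "\<And>r. \<bar>r\<bar> < 1 \<Longrightarrow> F r = H r + Z False s F r" using eq by (auto simp: abs_less_iff)
  have Ffix: "Tp H s F x = F x" for x by (rule Tp_fix[OF pF eq1])
  define \<rho>1 where "\<rho>1 = rho (Re s)"
  define \<rho>2 where "\<rho>2 = rho (Re s - 2)"
  define \<tau> where "\<tau> = max \<rho>1 \<rho>2"
  define \<tau>' where "\<tau>' = (1 + \<tau>) / 2"
  have r1: "0 \<le> \<rho>1" "\<rho>1 < 1" using rho_nonneg rho_lt1 s by (auto simp: \<rho>1_def)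
  have r2: "0 \<le> \<rho>2" "\<rho>2 < 1" using rho_nonneg rho_lt1 s by (auto simp: \<rho>2_def)
  have tau: "0 \<le> \<tau>" "\<tau> < 1" "\<rho>1 \<le> \<tau>" "\<rho>2 \<le> \<tau>" using r1 r2 by (auto simp: \<tau>_def)
  have tau': "\<tau> < \<tau>'" "\<tau>' < 1" "0 \<le> \<tau>'" using tau by (auto simp: \<tau>'_def)
  define it where "it n = ((\<lambda>(g, d). (Tp H s g, Sd H H' s g d)) ^^ n) (\<lambda>_. H 0, \<lambda>_. 0)" for n
  define g where "g n = fst (it n)" for n
  define d where "d n = snd (it n)" for n
  have g0: "g 0 = (\<lambda>_. H 0)" and d0: "d 0 = (\<lambda>_. 0)" by (simp_all add: g_def d_def it_def)
  have gS: "g (Suc n) = Tp H s (g n)" and dS: "d (Suc n) = Sd H H' s (g n) (d n)" for n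
    by (simp_all add: g_def d_def it_def case_prod_beta)
  have inv: "(\<forall>x. (g n has_vector_derivative d n x) (at x)) \<and> (\<forall>x. isCont (d n) x) \<and>
      (\<exists>B. \<forall>x. norm (g n x) \<le> B) \<and> (\<exists>B. \<forall>x. norm (d n x) \<le> B)" for n
  proof (induction n)
    case 0
    show ?case unfolding g0 d0 by (auto intro: has_vector_derivative_const)
  next
    case (Suc n)
    then obtain Bg Bd where dg: "\<And>x. (g n has_vector_derivative d n x) (at x)" and cd: "\<And>x. isCont (d n) x"
      and Bg: "\<And>x. norm (g n x) \<le> Bg" and Bd: "\<And>x. norm (d n x) \<le> Bd" by blast
    note st = step_lemma[OF s dH cH' MHa MH'a dg cd Bg Bd]
    have Bg0: "Bg \<ge> 0" using Bg[of 0] norm_ge_zero order.trans by blast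
    have "norm (g (Suc n) x) \<le> MH + \<rho>1 * Bg" for x
      unfolding gS \<rho>1_def by (rule Tp_bound) (use s MHa Bg Bg0 in auto)
    then show ?case unfolding gS dS using st by blast
  qed
  define B0 where "B0 = norm (H 0) + BF"
  have gF: "norm (g n x - F x) \<le> B0 * \<rho>1 ^ n" for n x
  proof (induction n arbitrary: x)
    case 0
    have "norm (H 0 - F x) \<le> norm (H 0) + norm (F x)" by (rule norm_triangle_ineq4)
    then show ?case using BF[of x] by (simp add: g0 B0_def)
  next
    case (Suc n)
    have B0: "B0 \<ge> 0" using BF[of 0] norm_ge_zero[of "F 0"] norm_ge_zero[of "H 0"] unfolding B0_def by linarith
    have "norm (Tp H s (g n) x - Tp H s F x) \<le> \<rho>1 * (B0 * \<rho>1 ^ n)"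
      unfolding \<rho>1_def by (rule Tp_contr) (use s Suc.IH B0 r1 in \<open>auto simp: \<rho>1_def\<close>)
    then show ?case unfolding gS Ffix by (simp add: mult_ac)
  qed
  have gd: "norm (g (Suc n) x - g n x) \<le> 2 * B0 * \<rho>1 ^ n" for n x
  proof -
    have "norm (g (Suc n) x - g n x) \<le> norm (g (Suc n) x - F x) + norm (g n x - F x)"
      by (rule norm_diff_triangle_le) (auto simp: norm_minus_commute)
    also have "\<dots> \<le> B0 * \<rho>1 ^ Suc n + B0 * \<rho>1 ^ n" by (intro add_mono gF)
    also have "\<dots> \<le> B0 * \<rho>1 ^ n + B0 * \<rho>1 ^ n"
    proof -
      have B0: "B0 \<ge> 0" using BF[of 0] norm_ge_zero[of "F 0"] norm_ge_zero[of "H 0"] unfolding B0_def by linarith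
      have "\<rho>1 ^ Suc n \<le> \<rho>1 ^ n" using r1 by (intro power_decreasing) auto
      then show ?thesis using B0 by (intro add_mono mult_left_mono) auto
    qed
    finally show ?thesis by simp
  qed
  obtain Bd1 where Bd1: "\<And>x. norm (d 1 x) \<le> Bd1" using inv[of 1] by blast
  define K where "K = pi + norm s"
  define Md where "Md = max Bd1 (K * (2 * B0) / (\<tau>' - \<tau>))"
  have Md1: "Bd1 \<le> Md" by (simp add: Md_def)
  have "K * (2 * B0) / (\<tau>' - \<tau>) \<le> Md" by (simp add: Md_def)
  then have Md2: "K * (2 * B0) \<le> Md * (\<tau>' - \<tau>)" using tau' by (simp add: pos_divide_le_eq)
  have K0: "K \<ge> 0" by (simp add: K_def)
  have B00: "B0 \<ge> 0" using BF[of 0] norm_ge_zero[of "F 0"] norm_ge_zero[of "H 0"] unfolding B0_def by linarith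
  have dd: "norm (d (Suc n) x - d n x) \<le> Md * \<tau>' ^ n" for n x
  proof (induction n arbitrary: x)
    case 0 then show ?case using Bd1[of x] Md1 by (simp add: d0)
  next
    case (Suc n)
    have "norm (d (Suc (Suc n)) x - d (Suc n) x) \<le> (pi + norm s) * (2 * B0 * \<rho>1 ^ n) + rho (Re s - 2) * (Md * \<tau>' ^ n)"
      unfolding dS[of "Suc n"] dS[of n] gS
      by (rule Sd_diff[OF s]) (use gd Suc.IH in \<open>auto simp: gS dS\<close>)
    also have "\<dots> \<le> K * (2 * B0) * \<tau>' ^ n + \<tau> * (Md * \<tau>' ^ n)"
    proof (intro add_mono)
      have "\<rho>1 ^ n \<le> \<tau>' ^ n" using tau tau' r1 by (intro power_mono) auto
      then show "(pi + norm s) * (2 * B0 * \<rho>1 ^ n) \<le> K * (2 * B0) * \<tau>' ^ n"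
        using K0 B00 by (simp add: K_def mult_left_mono mult.assoc)
      have Md0: "Md \<ge> 0" using Md1 Bd1[of 0] norm_ge_zero[of "d 1 0"] by linarith
      show "rho (Re s - 2) * (Md * \<tau>' ^ n) \<le> \<tau> * (Md * \<tau>' ^ n)"
      proof (rule mult_right_mono)
        show "rho (Re s - 2) \<le> \<tau>" using tau(4) by (simp add: \<rho>2_def)
        show "0 \<le> Md * \<tau>' ^ n" using Md0 tau' by simp
      qed
    qed
    also have "\<dots> \<le> Md * (\<tau>' - \<tau>) * \<tau>' ^ n + \<tau> * (Md * \<tau>' ^ n)"
      using Md2 tau' by (intro add_mono[OF mult_right_mono order.refl]) auto
    also have "\<dots> = Md * \<tau>' ^ Suc n" by (simp add: algebra_simps)
    finally show ?case .
  qed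
  obtain D where D: "\<And>x. (\<lambda>n. d n x) \<longlonglongrightarrow> D x" "\<And>x n. norm (D x - d n x) \<le> Md * \<tau>' ^ n / (1 - \<tau>')"
    using geom_limit[where u=d and C=Md and \<tau>=\<tau>', OF dd tau'(3) tau'(2)] by blast
  have gconv: "(\<lambda>n. g n x) \<longlonglongrightarrow> F x" for x
    by (rule geom_tendsto[of _ _ B0 \<rho>1]) (use gF r1 in auto)
  have "\<exists>G0. \<forall>x\<in>UNIV. (\<lambda>n. g n x) \<longlonglongrightarrow> G0 x \<and> (G0 has_derivative (\<lambda>h. h *\<^sub>R D x)) (at x within UNIV)"
  proof (rule has_derivative_sequence[where f'="\<lambda>n x h. h *\<^sub>R d n x"])
    show "convex (UNIV :: real set)" by simp
    show "\<And>n x. x \<in> UNIV \<Longrightarrow> (g n has_derivative (\<lambda>h. h *\<^sub>R d n x)) (at x within UNIV)"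
      using inv by (auto simp: has_vector_derivative_def)
    show "\<forall>\<^sub>F n in sequentially. \<forall>x\<in>UNIV. \<forall>h. norm (h *\<^sub>R d n x - h *\<^sub>R D x) \<le> e * norm h"
      if e: "e > 0" for e
    proof -
      have "(\<lambda>n. Md / (1 - \<tau>') * \<tau>' ^ n) \<longlonglongrightarrow> Md / (1 - \<tau>') * 0"
        by (intro tendsto_mult tendsto_const LIMSEQ_power_zero) (use tau' in auto)
      then have "eventually (\<lambda>n. Md / (1 - \<tau>') * \<tau>' ^ n < e) sequentially"
        using e by (simp add: order_tendsto_iff)
      then show ?thesis
      proof eventually_elim
        case (elim n)
        show ?case
        proof (intro ballI allI)
          fix x :: real and h :: real
          have "norm (h *\<^sub>R d n x - h *\<^sub>R D x) = \<bar>h\<bar> * norm (D x - d n x)"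
            by (simp add: scaleR_diff_right[symmetric] norm_minus_commute)
          also have "\<dots> \<le> \<bar>h\<bar> * (Md / (1 - \<tau>') * \<tau>' ^ n)"
            using D(2)[of x n] by (intro mult_left_mono) (auto simp: divide_inverse mult_ac)
          also have "\<dots> \<le> \<bar>h\<bar> * e" using elim by (intro mult_left_mono) auto
          finally show "norm (h *\<^sub>R d n x - h *\<^sub>R D x) \<le> e * norm h" by (simp add: mult.commute)
        qed
      qed
    qed
    show "(0::real) \<in> UNIV" by simp
    show "(\<lambda>n. g n 0) \<longlonglongrightarrow> F 0" by (rule gconv)
  qed
  then obtain G0 where G0: "\<And>x. (\<lambda>n. g n x) \<longlonglongrightarrow> G0 x" "\<And>x. (G0 has_derivative (\<lambda>h. h *\<^sub>R D x)) (at x)"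
    by auto
  have "G0 = F" using G0(1) gconv LIMSEQ_unique by (intro ext) blast
  then have dF: "(F has_vector_derivative D x) (at x)" for x using G0(2) by (simp add: has_vector_derivative_def)
  have cD: "isCont D x" for x
  proof (rule isCont_unif_limit[where u=d and C="Md / (1 - \<tau>')" and \<tau>=\<tau>'])
    show "isCont (d n) x" for n using inv by blast
    show "norm (D y - d n y) \<le> Md / (1 - \<tau>') * \<tau>' ^ n" for n y
      using D(2)[of y n] by (simp add: divide_inverse mult_ac)
  qed (use tau' in auto)
  show ?thesis using dF cD by blast
qed



lemma not_bot_Icc: "x \<in> {-1..1::real} \<Longrightarrow> at x within {-1..1} \<noteq> bot"
  using trivial_limit_within[of x "{-1..1::real}"] islimpt_Icc[of "-1" 1 x] by auto

lemma smooth_lemma: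
  "\<forall>k h F. real (2 * m) < - Re k \<longrightarrow> Re k < 0 \<longrightarrow> Cm_on m {-1..1} h \<longrightarrow> (\<forall>x. isCont F x) \<longrightarrow>
     (\<forall>x. F (x + 1) = F x) \<longrightarrow> (\<forall>x\<in>{-1..1}. F x = h x + Z False (- k) F x) \<longrightarrow> Cm_on m UNIV F"
proof (induction m)
  case 0
  show ?case by (auto simp: Cm_zero intro!: continuous_at_imp_continuous_on)
next
  case (Suc m)
  show ?case
  proof (intro allI impI)
    fix k h F
    assume k: "real (2 * Suc m) < - Re k" and k0: "Re k < 0" and hC: "Cm_on (Suc m) {-1..1} h"
      and cF: "\<forall>x. isCont F x" and pF: "\<forall>x. F (x + 1) = F x"
      and eq: "\<forall>x\<in>{-1..1}. F x = h x + Z False (- k) F x"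
    obtain h' where dh: "\<And>x. x \<in> {-1..1} \<Longrightarrow> (h has_vector_derivative h' x) (at x within {-1..1})"
      and ch: "continuous_on {-1..1} h" and h'C: "Cm_on m {-1..1} h'"
      using Cm_SucD[OF hC] by blast
    have ch': "continuous_on {-1..1} h'" using Cm_le[OF h'C, of 0] by (simp add: Cm_zero)
    have s2: "Re (- k) > 2" using k by simp
    obtain G where cG: "\<And>x. isCont G x" and dF: "\<And>x. (F has_vector_derivative G x) (at x)"
      using C1_lemma[OF s2 dh ch'] cF pF eq by blast
    have FCm: "Cm_on m UNIV F"
    proof (rule Suc.IH[rule_format, of k h F])
      show "real (2 * m) < - Re k" using k by simp
    qed (use k0 Cm_le[OF hC, of m] cF pF eq in auto)
    have FB: "BCm m F" by (rule Cm_per_BCm[OF FCm]) (use pF in auto)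
    obtain BF where BF: "\<And>x. norm (F x) \<le> BF" using BCm_zero[OF FB] by blast
    have pG: "G (x + 1) = G x" for x by (rule per_deriv[of F G]) (use pF dF in auto)
    define h1 where "h1 x = h' x + (- k) * Z True (- k - 1) F x" for x
    have eqG: "G x = h1 x + Z False (- (k + 2)) G x" if x: "x \<in> {-1..1}" for x
    proof -
      have dZ: "(Z False (- k) F has_vector_derivative ((- k) * Z True (- k - 1) F x + Z False (- k - 2) G x)) (at x)"
        using Z_deriv_all[of "- k" F BF G False x] k BF dF by auto
      have dE: "((\<lambda>y. h y + Z False (- k) F y) has_vector_derivative
          (h' x + ((- k) * Z True (- k - 1) F x + Z False (- k - 2) G x))) (at x within {-1..1})"
        by (intro has_vector_derivative_add dh[OF x] has_vector_derivative_at_within[OF dZ])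
      have dF': "(F has_vector_derivative (h' x + ((- k) * Z True (- k - 1) F x + Z False (- k - 2) G x))) (at x within {-1..1})"
        by (rule has_vector_derivative_transform_within[OF dE zero_less_one x]) (use eq in auto)
      have "G x = h' x + ((- k) * Z True (- k - 1) F x + Z False (- k - 2) G x)"
        by (rule vector_derivative_unique_within[OF not_bot_Icc[OF x] has_vector_derivative_at_within[OF dF] dF'])
      then show ?thesis by (simp add: h1_def algebra_simps)
    qed
    have h1C: "Cm_on m {-1..1} h1"
      unfolding h1_def
    proof (intro Cm_add Cm_cmult h'C)
      show "Cm_on m {-1..1} (Z True (- k - 1) F)"
        by (rule weight_lemma) (use k FB in auto)
    qed
    have GCm: "Cm_on m UNIV G"
    proof (rule Suc.IH[rule_format, of "k + 2" h1 G])
      show "real (2 * m) < - Re (k + 2)" using k by simp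
      show "Re (k + 2) < 0" using k by simp
    qed (use h1C cG pG eqG in auto)
    show "Cm_on (Suc m) UNIV F"
    proof (rule Cm_SucI[OF _ _ GCm])
      show "(F has_vector_derivative G x) (at x within UNIV)" for x using dF by simp
      show "continuous_on UNIV F" using cF continuous_at_imp_continuous_on by blast
    qed
  qed
qed



lemma not_bot_Rats: "at (x::real) within \<rat> \<noteq> bot"
proof -
  have "x islimpt \<rat>"
    unfolding islimpt_approachable_real
  proof (intro allI impI)
    fix e :: real assume e: "e > 0"
    obtain r where r: "r \<in> \<rat>" "x < r" "r < x + e" using Rats_dense_in_real[of x "x + e"] e by auto
    then show "\<exists>x'\<in>\<rat>. x' \<noteq> x \<and> \<bar>x' - x\<bar> < e" by (intro bexI[of _ r]) auto
  qed
  then show ?thesis using trivial_limit_within by blast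
qed

lemma dense_zero:
  fixes E :: "real \<Rightarrow> complex"
  assumes c: "isCont E x" and d: "\<delta> > 0" and z: "\<And>y. y \<in> \<rat> \<Longrightarrow> \<bar>y - x\<bar> < \<delta> \<Longrightarrow> E y = 0"
  shows "E x = 0"
proof -
  have 1: "(E \<longlongrightarrow> E x) (at x within \<rat>)"
    using continuous_at_imp_continuous_within[OF c, of "\<rat>"] by (simp add: continuous_within)
  have "eventually (\<lambda>y. E y = 0) (at x within \<rat>)"
    unfolding eventually_at using d z by (auto simp: dist_real_def)
  then have 2: "(E \<longlongrightarrow> 0) (at x within \<rat>)" by (simp add: tendsto_eventually)
  show ?thesis using tendsto_unique[OF not_bot_Rats 1 2] .
qed

lemma inv_right:
  fixes r :: real
  assumes r: "r > 0"
  shows "filterlim (\<lambda>t. - 1 / t) (at_right (- 1 / r)) (at_right r)"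
proof (rule tendsto_imp_filterlim_at_right)
  show "((\<lambda>t. - 1 / t) \<longlongrightarrow> - 1 / r) (at_right r)"
  proof -
    have "((\<lambda>t. - inverse t) \<longlongrightarrow> - inverse r) (at_right r)"
      by (intro tendsto_minus tendsto_inverse tendsto_ident_at) (use r in auto)
    moreover have "(\<lambda>t::real. - 1 / t) = (\<lambda>t. - inverse t)" by (auto simp: divide_inverse)
    ultimately show ?thesis by (simp add: divide_inverse)
  qed
  have "eventually (\<lambda>t. t \<in> {r<..<r + 1}) (at_right r)" by (rule eventually_at_right_real) simp
  then show "\<forall>\<^sub>F t in at_right r. - 1 / r < - 1 / t"
    by eventually_elim (use r in \<open>auto simp: field_simps\<close>)
qed

lemma inv_left:
  fixes r :: real
  assumes r: "r > 0"
  shows "filterlim (\<lambda>t. - 1 / t) (at_left (- 1 / r)) (at_left r)"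
proof (rule tendsto_imp_filterlim_at_left)
  show "((\<lambda>t. - 1 / t) \<longlongrightarrow> - 1 / r) (at_left r)"
  proof -
    have "((\<lambda>t. - inverse t) \<longlongrightarrow> - inverse r) (at_left r)"
      by (intro tendsto_minus tendsto_inverse tendsto_ident_at) (use r in auto)
    moreover have "(\<lambda>t::real. - 1 / t) = (\<lambda>t. - inverse t)" by (auto simp: divide_inverse)
    ultimately show ?thesis by (simp add: divide_inverse)
  qed
  have "eventually (\<lambda>t. t \<in> {r / 2<..<r}) (at_left r)" by (rule eventually_at_left_real) (use r in simp)
  then show "\<forall>\<^sub>F t in at_left r. - 1 / t < - 1 / r"
    by eventually_elim (use r in \<open>auto simp: field_simps\<close>)
qed

lemma shift_right: "filterlim (\<lambda>y. y - c) (at_right (x - c)) (at_right (x::real))"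
proof (rule tendsto_imp_filterlim_at_right)
  show "((\<lambda>y. y - c) \<longlongrightarrow> x - c) (at_right x)" by (auto intro!: tendsto_eq_intros)
  show "\<forall>\<^sub>F y in at_right x. x - c < y - c" by (simp add: eventually_at_filter)
qed

lemma shift_left: "filterlim (\<lambda>y. y - c) (at_left (x - c)) (at_left (x::real))"
proof (rule tendsto_imp_filterlim_at_left)
  show "((\<lambda>y. y - c) \<longlongrightarrow> x - c) (at_left x)" by (auto intro!: tendsto_eq_intros)
  show "\<forall>\<^sub>F y in at_left x. y - c < x - c" by (simp add: eventually_at_filter)
qed

lemma powr_nat_exp: "n > 0 \<Longrightarrow> (of_nat n :: complex) powr k = exp (k * of_real (ln (real n)))"
proof -
  assume n: "n > 0"
  have "(of_nat n :: complex) = of_real (real n)" by simp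
  then show ?thesis using n by (simp add: powr_def Ln_of_real)
qed

lemma Wt_powr_identity:
  assumes b: "b > 0" and q: "q > 0"
  shows "Wt (- k) (real b / real q) * (of_nat b) powr k = (of_nat q :: complex) powr k"
proof -
  have "ln (real b / real q) = ln (real b) - ln (real q)" using b q by (simp add: ln_div)
  then have "Wt (- k) (real b / real q) = exp (- k * (of_real (ln (real b)) - of_real (ln (real q))))"
    using b q by (simp add: Wt_def)
  then show ?thesis using b q
    by (simp add: powr_nat_exp exp_add[symmetric] algebra_simps)
qed

lemma f_int:
  fixes f :: "real \<Rightarrow> complex"
  assumes p: "\<forall>x\<in>\<rat>. f (x + 1) = f x" and x: "x \<in> \<rat>"
  shows "f (x + of_int n) = f x"
proof -
  have nat: "f (y + real m) = f y" if "y \<in> \<rat>" for y m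
  proof (induction m)
    case (Suc m)
    have "f (y + real (Suc m)) = f ((y + real m) + 1)" by (simp add: algebra_simps)
    also have "\<dots> = f (y + real m)" using p that by simp
    finally show ?case using Suc by simp
  qed simp
  show ?thesis
  proof (cases "n \<ge> 0")
    case True
    then obtain m where "n = int m" by (metis nonneg_eq_int)
    then show ?thesis using nat[OF x] by simp
  next
    case False
    define m where "m = nat (- n)"
    have m: "n = - int m" using False by (simp add: m_def)
    have xm: "x - real m \<in> \<rat>" using x by simp
    have "f x = f ((x - real m) + real m)" by simp
    also have "\<dots> = f (x - real m)" by (rule nat[OF xm])
    finally show ?thesis using m by simp
  qed
qed

lemma Tp_fix_pt:
  assumes eq: "\<And>n::int. \<bar>x - of_int n\<bar> < 1 \<Longrightarrow> F (x - of_int n) = H (x - of_int n) + Z False s F (x - of_int n)"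
    and per: "\<And>n::int. F (x - of_int n) = F x"
  shows "Tp H s F x = F x"
proof -
  define t where "t = x - of_int \<lfloor>x\<rfloor>"
  have t: "0 \<le> t" "t < 1" unfolding t_def by (auto, linarith)
  have trm: "of_real (psi (x - of_int n)) * (H (x - of_int n) + Z False s F (x - of_int n)) = of_real (psi (x - of_int n)) * F x" for n :: int
    using eq[of n] per[of n] psi_out[of "x - of_int n"] by (cases "\<bar>x - of_int n\<bar> < 1") auto
  have e1: "x - of_int \<lfloor>x\<rfloor> = t" and e2: "x - of_int (\<lfloor>x\<rfloor> + 1) = t - 1" by (simp_all add: t_def)
  have tr1: "of_real (psi t) * (H t + Z False s F t) = of_real (psi t) * F x"
    using trm[of "\<lfloor>x\<rfloor>"] unfolding e1 .
  have tr2: "of_real (psi (t - 1)) * (H (t - 1) + Z False s F (t - 1)) = of_real (psi (t - 1)) * F x"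
    using trm[of "\<lfloor>x\<rfloor> + 1"] unfolding e2 .
  have "Tp H s F x = of_real (psi t) * (H t + Z False s F t) + of_real (psi (t - 1)) * (H (t - 1) + Z False s F (t - 1))"
    by (simp add: Tp_def Per_def t_def)
  also have "\<dots> = of_real (psi t) * F x + of_real (psi (t - 1)) * F x"
    by (simp only: tr1 tr2)
  also have "\<dots> = of_real (psi t + psi (t - 1)) * F x" by (simp add: algebra_simps)
  also have "\<dots> = F x" using psi_sum[OF t] by simp
  finally show ?thesis .
qed

lemma coprime_shift:
  fixes a q n :: int
  assumes "coprime a q"
  shows "coprime (a - n * q) q"
proof (rule coprimeI)
  fix c assume c1: "c dvd a - n * q" and c2: "c dvd q"
  have "c dvd (a - n * q) + n * q" using c1 c2 by (intro dvd_add) auto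
  then have "c dvd a" by simp
  then show "is_unit c" using assms c2 coprime_common_divisor by blast
qed


theorem theorem1p1:
  fixes k :: complex and f h :: "real \<Rightarrow> complex" and hp hm :: complex
  assumes k_neg: "Re k < 0"
    and f_per: "\<forall>x\<in>\<rat>. f (x + 1) = f x"
    and h_eq: "\<forall>x\<in>\<rat> - {0}.
                 h x = f x - (complex_of_real \<bar>x\<bar>) powr (- k) * f (- 1 / x)"
    and h_cont: "continuous_on ({-1..1} - {0}) h"
    and h_right: "(h \<longlongrightarrow> hp) (at_right 0)"
    and h_left: "(h \<longlongrightarrow> hm) (at_left 0)"
  shows "(\<forall>x. x \<notin> \<rat> \<longrightarrow> (\<exists>L. (f \<longlongrightarrow> L) (at x within \<rat>)))
    \<and> (\<forall>x. x \<notin> \<rat> \<longrightarrow> isCont (fdag f) x)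
    \<and> (\<forall>(a::int) (q::nat). q \<ge> 1 \<longrightarrow> coprime a (int q) \<longrightarrow>
          (fdag f \<longlongrightarrow> f (of_int a / of_nat q) + (of_nat q) powr k * (hp - f 0))
             (at_right (of_int a / of_nat q))
        \<and> (fdag f \<longlongrightarrow> f (of_int a / of_nat q) + (of_nat q) powr k * (hm - f 0))
             (at_left (of_int a / of_nat q)))
    \<and> (continuous_on UNIV (fdag f) \<longleftrightarrow> hp = f 0 \<and> hm = f 0)
    \<and> (hp = f 0 \<and> hm = f 0 \<longrightarrow>
         (\<forall>m::nat. real m < \<bar>Re k\<bar> / 2 \<longrightarrow> Cm_on m {-1..1} (h(0 := hp))
              \<longrightarrow> Cm_on m UNIV (fdag f)))"
proof -
  define s where "s = - k"
  have s0: "Re s > 0" using k_neg by (simp add: s_def)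
  define c where "c = f 0"
  define H where "H = h(0 := c)"
  have Wk: "complex_of_real \<bar>r\<bar> powr (- k) = Wt s r" for r by (simp add: Wt_powr s_def)
  have Zf: "Z False s g r = Wt s r * g (- 1 / r)" if "r \<noteq> 0" for g r using that by (simp add: Z_def Ee_def)
  have fper: "f (x + of_int n) = f x" if "x \<in> \<rat>" for x n using f_int[OF f_per that] .
  have feq: "f r = h r + Wt s r * f (- 1 / r)" if "r \<in> \<rat>" "r \<noteq> 0" for r
  proof -
    have "h r = f r - Wt s r * f (- 1 / r)" using h_eq that Wk[of r] by auto
    then show ?thesis by simp
  qed
  have hcont: "isCont h r" if "0 < \<bar>r\<bar>" "\<bar>r\<bar> < 1" for r
  proof -
    have "continuous_on ({-1<..<1} - {0}) h" by (rule continuous_on_subset[OF h_cont]) auto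
    moreover have "open ({-1<..<1} - {0::real})" by (intro open_Diff) auto
    ultimately show ?thesis using continuous_on_eq_continuous_at that by (fastforce simp: abs_less_iff)
  qed
  have Hc: "isCont H r" if "\<bar>r\<bar> < 1" "r \<notin> \<rat>" for r
  proof -
    have r0: "r \<noteq> 0" using that by auto
    have "eventually (\<lambda>y. y \<in> - {0}) (nhds r)" using r0 by (intro eventually_nhds_in_open) auto
    then have "eventually (\<lambda>y. h y = H y) (nhds r)" by eventually_elim (auto simp: H_def)
    moreover have "isCont h r" using hcont r0 that by auto
    ultimately show ?thesis using isCont_cong by fastforce
  qed
  obtain A where A: "\<And>r. \<bar>r\<bar> < 1 \<Longrightarrow> norm (H r) \<le> A"
  proof -
    have "eventually (\<lambda>x. dist (h x) hp < 1) (at_right 0)" using tendstoD[OF h_right, of 1] by simp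
    then obtain b1 where b1: "b1 > 0" "\<And>y. 0 < y \<Longrightarrow> y < b1 \<Longrightarrow> dist (h y) hp < 1"
      unfolding eventually_at_right_field by auto
    have "eventually (\<lambda>x. dist (h x) hm < 1) (at_left 0)" using tendstoD[OF h_left, of 1] by simp
    then obtain b2 where b2: "b2 < 0" "\<And>y. b2 < y \<Longrightarrow> y < 0 \<Longrightarrow> dist (h y) hm < 1"
      unfolding eventually_at_left_field by auto
    define \<delta> where "\<delta> = min (min b1 (- b2)) (1/2)"
    have \<delta>: "\<delta> > 0" "\<delta> \<le> b1" "\<delta> \<le> - b2" "\<delta> \<le> 1/2" using b1 b2 by (auto simp: \<delta>_def)
    have sub1: "{\<delta>..1} \<subseteq> {-1..1} - {0}" using \<delta> by auto
    have sub2: "{-1..-\<delta>} \<subseteq> {-1..1} - {0}" using \<delta> by auto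
    obtain B1 where B1: "\<forall>x\<in>{\<delta>..1}. norm (h x) \<le> B1"
      using cont_bounded_compact[OF continuous_on_subset[OF h_cont sub1] compact_Icc] by blast
    obtain B2 where B2: "\<forall>x\<in>{-1..-\<delta>}. norm (h x) \<le> B2"
      using cont_bounded_compact[OF continuous_on_subset[OF h_cont sub2] compact_Icc] by blast
    define A where "A = max (max (norm hp + 1) (norm hm + 1)) (max (max B1 B2) (norm c))"
    have "norm (H r) \<le> A" if r: "\<bar>r\<bar> < 1" for r
    proof -
      consider "r = 0" | "0 < r" "r < \<delta>" | "\<delta> \<le> r" | "- \<delta> < r" "r < 0" | "r \<le> - \<delta>" by linarith
      then show ?thesis
      proof cases
        case 1 then show ?thesis by (simp add: H_def A_def)
      next
        case 2
        have "norm (h r) \<le> norm hp + norm (h r - hp)" by (rule norm_triangle_sub)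
        also have "\<dots> \<le> norm hp + 1" using b1(2)[of r] 2 \<delta> by (simp add: dist_norm)
        finally show ?thesis using 2 by (simp add: H_def A_def)
      next
        case 3
        then have "norm (h r) \<le> B1" using B1 r by auto
        then show ?thesis using 3 \<delta> by (simp add: H_def A_def)
      next
        case 4
        have "norm (h r) \<le> norm hm + norm (h r - hm)" by (rule norm_triangle_sub)
        also have "\<dots> \<le> norm hm + 1" using b2(2)[of r] 4 \<delta> by (simp add: dist_norm)
        finally show ?thesis using 4 by (simp add: H_def A_def)
      next
        case 5
        then have "norm (h r) \<le> B2" using B2 r by auto
        then show ?thesis using 5 \<delta> by (simp add: H_def A_def)
      qed
    qed
    then show ?thesis using that by blast
  qed
  obtain F where Ffix: "\<And>x. F x = Tp H s F x" and BF: "\<exists>B. \<forall>x. norm (F x) \<le> B"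
    and Fc: "\<And>x. x \<notin> \<rat> \<Longrightarrow> isCont F x"
    using fixed_point_exists[OF s0 A Hc] by blast
  obtain BFv where BFv: "\<And>x. norm (F x) \<le> BFv" using BF by blast
  have pF: "F (x + 1) = F x" for x using Ffix[of "x + 1"] Ffix[of x] Tp_periodic by metis
  have ffix: "Tp H s f x = f x" if x: "x \<in> \<rat>" for x
  proof (rule Tp_fix_pt)
    fix n :: int
    have xn: "x - of_int n \<in> \<rat>" using x by simp
    show "f (x - of_int n) = f x" using fper[OF x, of "- n"] by simp
    show "f (x - of_int n) = H (x - of_int n) + Z False s f (x - of_int n)"
    proof (cases "x - of_int n = 0")
      case True then show ?thesis by (simp add: H_def c_def)
    next
      case False then show ?thesis using feq[OF xn False] Zf[OF False] by (simp add: H_def)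
    qed
  qed
  define \<rho> where "\<rho> = rho (Re s)"
  have \<rho>: "0 \<le> \<rho>" "\<rho> < 1" using rho_nonneg rho_lt1 s0 by (auto simp: \<rho>_def)
  have A0: "A \<ge> 0"
  proof -
    have "norm (H 0) \<le> A" using A[of 0] by simp
    then show ?thesis using norm_ge_zero[of "H 0"] by linarith
  qed
  define M where "M = A / (1 - \<rho>)"
  have M0: "M \<ge> 0" using A0 \<rho> by (simp add: M_def)
  have AM: "A + \<rho> * M = M" using \<rho> by (simp add: M_def field_simps)
  have fbq: "\<forall>a. norm (f (of_int a / of_nat q)) \<le> M" if "q \<ge> 1" for q
    using that
  proof (induction q rule: less_induct)
    case (less q)
    show ?case
    proof
      fix a :: int
      define x where "x = of_int a / (of_nat q :: real)"
      have xQ: "x \<in> \<rat>" by (simp add: x_def)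
      have q0: "real q > 0" using less.prems by simp
      have "norm (Tp H s f x) \<le> A + rho (Re s) * M"
      proof (rule Tp_bound[OF s0 A M0])
        fix n :: int assume n1: "0 < \<bar>x - of_int n\<bar>" and n2: "\<bar>x - of_int n\<bar> < 1"
        define b where "b = a - n * int q"
        have xb: "x - of_int n = of_int b / of_nat q" using q0 by (simp add: x_def b_def field_simps)
        have b0: "b \<noteq> 0" using n1 xb by auto
        have bq: "\<bar>b\<bar> < int q"
        proof -
          have "\<bar>of_int b / (of_nat q :: real)\<bar> < 1" using n2 xb by simp
          moreover have "\<bar>of_int b / (of_nat q :: real)\<bar> = \<bar>real_of_int b\<bar> / real q" using q0 by (simp add: abs_divide)
          ultimately have "\<bar>real_of_int b\<bar> / real q < 1" by simp
          then have "\<bar>real_of_int b\<bar> < 1 * real q" using pos_divide_less_eq[OF q0] by blast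
          then have "\<bar>real_of_int b\<bar> < real q" by simp
          then show ?thesis by linarith
        qed
        have inv: "- 1 / (x - of_int n) = of_int (- int q * sgn b) / of_nat (nat \<bar>b\<bar>)"
          using b0 q0 unfolding xb by (cases "b > 0") (auto simp: field_simps)
        have "nat \<bar>b\<bar> < q" "nat \<bar>b\<bar> \<ge> 1" using bq b0 by auto
        then have "\<forall>a. norm (f (of_int a / of_nat (nat \<bar>b\<bar>))) \<le> M" by (rule less.IH)
        then have "norm (f (of_int (- int q * sgn b) / of_nat (nat \<bar>b\<bar>))) \<le> M" by blast
        then show "norm (f (- 1 / (x - of_int n))) \<le> M" unfolding inv .
      qed
      then show "norm (f (of_int a / of_nat q)) \<le> M" using ffix[OF xQ] AM by (simp add: x_def \<rho>_def)
    qed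
  qed
  have fbnd: "norm (f x) \<le> M" if xq: "x \<in> \<rat>" for x
  proof -
    obtain a b :: int where ab: "b > 0" "x = of_int a / of_int b" using Rats_cases'[OF xq] by metis
    have "x = of_int a / of_nat (nat b)" using ab by simp
    moreover have "nat b \<ge> 1" using ab by simp
    ultimately show ?thesis using fbq by metis
  qed
  have fF: "f x = F x" if x: "x \<in> \<rat>" for x
  proof -
    have BFv0: "BFv \<ge> 0" using BFv[of 0] norm_ge_zero[of "F 0"] by linarith
    have "\<forall>x\<in>\<rat>. norm (f x - F x) \<le> (M + BFv) * \<rho> ^ n" for n
    proof (induction n)
      case 0
      show ?case
      proof
        fix x :: real assume "x \<in> \<rat>"
        then have "norm (f x - F x) \<le> norm (f x) + norm (F x)" by (simp add: norm_triangle_ineq4)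
        also have "\<dots> \<le> M + BFv" using fbnd[OF \<open>x \<in> \<rat>\<close>] BFv[of x] by simp
        finally show "norm (f x - F x) \<le> (M + BFv) * \<rho> ^ 0" by simp
      qed
    next
      case (Suc n)
      show ?case
      proof
        fix x :: real assume xq: "x \<in> \<rat>"
        have "norm (Tp H s f x - Tp H s F x) \<le> \<rho> * ((M + BFv) * \<rho> ^ n)"
          unfolding \<rho>_def
        proof (rule Tp_contr[OF s0])
          show "0 \<le> (M + BFv) * rho (Re s) ^ n" using M0 BFv0 \<rho> by (simp add: \<rho>_def)
          fix m :: int assume "0 < \<bar>x - of_int m\<bar>"
          then have "- 1 / (x - of_int m) \<in> \<rat>" using xq by (intro Rats_divide) auto
          then show "norm (f (- 1 / (x - of_int m)) - F (- 1 / (x - of_int m))) \<le> (M + BFv) * rho (Re s) ^ n"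
            using Suc.IH by (simp add: \<rho>_def)
        qed
        then show "norm (f x - F x) \<le> (M + BFv) * \<rho> ^ Suc n"
          using ffix[OF xq] Ffix[of x] by (simp add: mult_ac)
      qed
    qed
    then have "norm (f x - F x) \<le> 0" using x by (intro le_geom_zero[OF _ \<rho>]) auto
    then show ?thesis by simp
  qed
  have flim: "(f \<longlongrightarrow> F x) (at x within \<rat>)" if "x \<notin> \<rat>" for x
  proof -
    have "(F \<longlongrightarrow> F x) (at x within \<rat>)"
      using continuous_at_imp_continuous_within[OF Fc[OF that], of "\<rat>"] by (simp add: continuous_within)
    moreover have "eventually (\<lambda>y. F y = f y) (at x within \<rat>)"
      by (auto simp: eventually_at_filter fF)
    ultimately show ?thesis using tendsto_cong by fastforce
  qed
  have fdagF: "fdag f = F"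
  proof
    fix x
    show "fdag f x = F x"
    proof (cases "x \<in> \<rat>")
      case True then show ?thesis by (simp add: fdag_def fF)
    next
      case False then show ?thesis by (simp add: fdag_def tendsto_Lim[OF not_bot_Rats flim[OF False]])
    qed
  qed
  have FeqQ: "F x = h x + Z False s F x" if "x \<in> \<rat>" "x \<noteq> 0" for x
  proof -
    have "- 1 / x \<in> \<rat>" using that by (intro Rats_divide) auto
    then show ?thesis using feq[OF that] fF[OF that(1)] fF[of "- 1 / x"] Zf[OF that(2)] by simp
  qed
  have Feq: "F x = h x + Z False s F x" if x: "x \<in> {-1..1}" "x \<noteq> 0" for x
  proof (cases "x \<in> \<rat>")
    case True then show ?thesis using FeqQ x by simp
  next
    case False
    have "x \<noteq> 1" using False by auto
    moreover have "x \<noteq> -1" using False by auto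
    ultimately have x1: "\<bar>x\<bar> < 1" using x by (auto simp: abs_less_iff)
    define E where "E y = F y - (h y + Z False s F y)" for y
    have cE: "isCont E x"
      unfolding E_def[abs_def]
      using Fc[OF False] hcont[of x] x1 x Z_isCont[of x F False s] Fc[OF inv_irrat[OF False]]
      by (intro continuous_intros) auto
    have "E x = 0"
    proof (rule dense_zero[OF cE])
      show "min \<bar>x\<bar> (1 - \<bar>x\<bar>) > 0" using x1 x by auto
      fix y assume y: "y \<in> \<rat>" "\<bar>y - x\<bar> < min \<bar>x\<bar> (1 - \<bar>x\<bar>)"
      then have "y \<noteq> 0" by auto
      then show "E y = 0" using FeqQ[OF y(1)] by (simp add: E_def)
    qed
    then show ?thesis by (simp add: E_def)
  qed
  have F0r: "(F \<longlongrightarrow> hp) (at_right 0)"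
  proof -
    have "((\<lambda>t. h t + Z False s F t) \<longlongrightarrow> hp + 0) (at_right 0)"
      by (intro tendsto_add h_right Z_tendsto0[OF s0 BFv])
    moreover have "eventually (\<lambda>t. h t + Z False s F t = F t) (at_right 0)"
    proof -
      have "eventually (\<lambda>t. t \<in> {0<..<1}) (at_right (0::real))" by (rule eventually_at_right_real) simp
      then show ?thesis by eventually_elim (use Feq in auto)
    qed
    ultimately show ?thesis using tendsto_cong by fastforce
  qed
  have F0l: "(F \<longlongrightarrow> hm) (at_left 0)"
  proof -
    have "((\<lambda>t. h t + Z False s F t) \<longlongrightarrow> hm + 0) (at_left 0)"
      by (intro tendsto_add h_left Z_tendsto0[OF s0 BFv])
    moreover have "eventually (\<lambda>t. h t + Z False s F t = F t) (at_left 0)"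
    proof -
      have "eventually (\<lambda>t. t \<in> {-1<..<0}) (at_left (0::real))" by (rule eventually_at_left_real) simp
      then show ?thesis by eventually_elim (use Feq in auto)
    qed
    ultimately show ?thesis using tendsto_cong by fastforce
  qed
  have Fsh: "F (y - of_int n) = F y" for y n using per_int[where F=F, OF pF, of y "- n"] by simp
  have Fsh': "(\<lambda>y. F (y - of_int n)) = F" for n using Fsh by auto
  have hlim: "(h \<longlongrightarrow> h r) (at r within S)" if "0 < \<bar>r\<bar>" "\<bar>r\<bar> < 1" for r S
    using continuous_at_imp_continuous_within[OF hcont[OF that], of S] by (simp add: continuous_within)
  have Wlim: "(Wt s \<longlongrightarrow> Wt s r) (at r within S)" if "r \<noteq> 0" for r S
  proof -
    have "isCont (Wt s) r" using Wt_deriv[OF that] by (rule has_vector_derivative_continuous)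
    then show ?thesis using continuous_at_imp_continuous_within[of r "Wt s" S] by (simp add: continuous_within)
  qed
  have J: "\<forall>a. coprime a (int q) \<longrightarrow>
      (F \<longlongrightarrow> f (of_int a / of_nat q) + (of_nat q) powr k * (hp - c)) (at_right (of_int a / of_nat q)) \<and>
      (F \<longlongrightarrow> f (of_int a / of_nat q) + (of_nat q) powr k * (hm - c)) (at_left (of_int a / of_nat q))"
    if "q \<ge> 1" for q
    using that
  proof (induction q rule: less_induct)
    case (less q)
    show ?case
    proof (intro allI impI)
      fix a :: int assume cop: "coprime a (int q)"
      show "(F \<longlongrightarrow> f (of_int a / of_nat q) + (of_nat q) powr k * (hp - c)) (at_right (of_int a / of_nat q)) \<and>
        (F \<longlongrightarrow> f (of_int a / of_nat q) + (of_nat q) powr k * (hm - c)) (at_left (of_int a / of_nat q))"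
      proof (cases "q = 1")
        case True
        have fa: "f (of_int a) = c" using fper[of 0 a] by (simp add: c_def)
        have r: "(F \<longlongrightarrow> hp) (at_right (of_int a))"
          using filterlim_compose[OF F0r shift_right[of "of_int a" "of_int a", simplified]] by (simp add: Fsh')
        have l: "(F \<longlongrightarrow> hm) (at_left (of_int a))"
          using filterlim_compose[OF F0l shift_left[of "of_int a" "of_int a", simplified]] by (simp add: Fsh')
        show ?thesis using r l True fa by simp
      next
        case False
        then have q2: "q \<ge> 2" using less.prems by auto
        have q0: "real q > 0" using q2 by simp
        define x where "x = of_int a / (of_nat q :: real)"
        define n where "n = \<lfloor>x\<rfloor>"
        define b where "b = a - n * int q"
        define r where "r = x - of_int n"
        have xQ: "x \<in> \<rat>" by (simp add: x_def)
        have rb: "r = of_int b / of_nat q" using q0 by (simp add: r_def x_def b_def field_simps)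
        have r01: "0 \<le> r" "r < 1" unfolding r_def n_def by (auto, linarith)
        have b0: "0 \<le> b" "b < int q"
        proof -
          have "0 \<le> of_int b / real q" "of_int b / real q < 1" using r01 rb by auto
          then have "0 \<le> real_of_int b" "real_of_int b < 1 * real q"
            using q0 by (auto simp: zero_le_divide_iff pos_divide_less_eq)
          then show "0 \<le> b" "b < int q" by linarith+
        qed
        have bn0: "b \<noteq> 0"
        proof
          assume "b = 0"
          then have "int q dvd a" by (simp add: b_def)
          then have "is_unit (int q)" using cop by (metis coprime_common_divisor dvd_refl)
          then show False using q2 by simp
        qed
        have bpos: "b > 0" using b0 bn0 by simp
        have rpos: "r > 0" using rb bpos q0 by simp
        have rQ: "r \<in> \<rat>" using rb by simp
        have copb: "coprime (- int q) (int (nat b))"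
          using coprime_shift[OF cop, of n] bpos by (simp add: b_def coprime_commute)
        have nb: "nat b < q" "nat b \<ge> 1" using b0 bpos by auto
        have IH: "(F \<longlongrightarrow> f (- 1 / r) + (of_nat (nat b)) powr k * (hp - c)) (at_right (- 1 / r)) \<and>
            (F \<longlongrightarrow> f (- 1 / r) + (of_nat (nat b)) powr k * (hm - c)) (at_left (- 1 / r))"
        proof -
          have inv: "- 1 / r = of_int (- int q) / of_nat (nat b)" using bpos q0 by (simp add: rb field_simps)
          show ?thesis using less.IH[OF nb, rule_format, OF copb] unfolding inv .
        qed
        have val: "h r + Wt s r * (f (- 1 / r) + (of_nat (nat b)) powr k * (v - c)) = f x + (of_nat q) powr k * (v - c)" for v
        proof -
          have "f x = f r" using fper[OF xQ, of "- n"] by (simp add: r_def)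
          also have "\<dots> = h r + Wt s r * f (- 1 / r)" using feq[OF rQ] rpos by simp
          finally have fx: "f x = h r + Wt s r * f (- 1 / r)" .
          have "r = real (nat b) / real q" using rb bpos by simp
          then have "Wt s r * (of_nat (nat b)) powr k = (of_nat q) powr k"
            using Wt_powr_identity[of "nat b" q k] nb q0 by (simp add: s_def)
          then show ?thesis using fx by (simp add: algebra_simps)
        qed
        have ev: "eventually (\<lambda>t. h t + Wt s t * F (- 1 / t) = F t) (at r within S)" for S
        proof -
          have "eventually (\<lambda>t. t \<in> {0<..<1}) (nhds r)" using rpos r01 by (intro eventually_nhds_in_open) auto
          then have "eventually (\<lambda>t. h t + Wt s t * F (- 1 / t) = F t) (nhds r)"
            by eventually_elim (use Feq Zf in auto)
          then show ?thesis unfolding eventually_at_filter by (rule eventually_mono) auto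
        qed
        have side: "(F \<longlongrightarrow> f x + (of_nat q) powr k * (v - c)) F2"
          if F2: "F2 = at_right x \<or> F2 = at_left x"
            and G: "(F \<longlongrightarrow> f (- 1 / r) + (of_nat (nat b)) powr k * (v - c)) G2"
            and inv: "filterlim (\<lambda>t. - 1 / t) G2 F1"
            and F1: "F1 = at_right r \<or> F1 = at_left r"
            and sh: "filterlim (\<lambda>y. y - of_int n) F1 F2"
          for v F1 F2 G2
        proof -
          have l1: "((\<lambda>t. F (- 1 / t)) \<longlongrightarrow> f (- 1 / r) + (of_nat (nat b)) powr k * (v - c)) F1"
            using filterlim_compose[OF G inv] .
          have hl: "(h \<longlongrightarrow> h r) F1" using hlim[of r] rpos r01 F1 by auto
          have wl: "(Wt s \<longlongrightarrow> Wt s r) F1" using Wlim[of r] rpos F1 by auto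
          have "((\<lambda>t. h t + Wt s t * F (- 1 / t)) \<longlongrightarrow> h r + Wt s r * (f (- 1 / r) + (of_nat (nat b)) powr k * (v - c))) F1"
            by (intro tendsto_add tendsto_mult hl wl l1)
          moreover have "eventually (\<lambda>t. h t + Wt s t * F (- 1 / t) = F t) F1" using ev F1 by auto
          ultimately have "(F \<longlongrightarrow> f x + (of_nat q) powr k * (v - c)) F1"
            using val[of v] tendsto_cong by fastforce
          from filterlim_compose[OF this sh] show ?thesis by (simp add: Fsh')
        qed
        have rx: "r = x - of_int n" by (simp add: r_def)
        have "(F \<longlongrightarrow> f x + (of_nat q) powr k * (hp - c)) (at_right x)"
          by (rule side[OF _ conjunct1[OF IH] inv_right[OF rpos]]) (use shift_right[of "of_int n" x] rx in auto)
        moreover have "(F \<longlongrightarrow> f x + (of_nat q) powr k * (hm - c)) (at_left x)"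
          by (rule side[OF _ conjunct2[OF IH] inv_left[OF rpos]]) (use shift_left[of "of_int n" x] rx in auto)
        ultimately show ?thesis by (simp add: x_def)
      qed
    qed
  qed
  have allcont: "isCont F x" if hpc: "hp = c" "hm = c" for x
  proof (cases "x \<in> \<rat>")
    case False then show ?thesis by (rule Fc)
  next
    case True
    obtain a b :: int where ab: "b > 0" "coprime a b" "x = of_int a / of_int b" using Rats_cases'[OF True] by metis
    define q where "q = nat b"
    have q1: "q \<ge> 1" and xq: "x = of_int a / of_nat q" and cop: "coprime a (int q)" using ab by (auto simp: q_def)
    have Fx: "F x = f x" using fF[OF True] by simp
    have "(F \<longlongrightarrow> F x) (at_right x) \<and> (F \<longlongrightarrow> F x) (at_left x)"
      using J[OF q1, rule_format, OF cop] hpc by (simp add: xq[symmetric] Fx)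
    then show ?thesis unfolding isCont_def by (intro filterlim_split_at) auto
  qed
  have F0: "F 0 = f 0" using fF[of 0] by simp
  show ?thesis
  proof (intro conjI)
    show "\<forall>x. x \<notin> \<rat> \<longrightarrow> (\<exists>L. (f \<longlongrightarrow> L) (at x within \<rat>))" using flim by blast
    show "\<forall>x. x \<notin> \<rat> \<longrightarrow> isCont (fdag f) x" using Fc fdagF by simp
    show "\<forall>(a::int) (q::nat). q \<ge> 1 \<longrightarrow> coprime a (int q) \<longrightarrow>
          (fdag f \<longlongrightarrow> f (of_int a / of_nat q) + (of_nat q) powr k * (hp - f 0))
             (at_right (of_int a / of_nat q))
        \<and> (fdag f \<longlongrightarrow> f (of_int a / of_nat q) + (of_nat q) powr k * (hm - f 0))
             (at_left (of_int a / of_nat q))"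
      using J unfolding fdagF c_def by blast
    show "continuous_on UNIV (fdag f) = (hp = f 0 \<and> hm = f 0)"
    proof
      assume cont: "continuous_on UNIV (fdag f)"
      then have "isCont F 0" using fdagF continuous_on_eq_continuous_at[OF open_UNIV] by auto
      then have r: "(F \<longlongrightarrow> F 0) (at_right 0)" and l: "(F \<longlongrightarrow> F 0) (at_left 0)"
        unfolding isCont_def by (auto intro: tendsto_mono[OF at_le])
      have "hp = F 0" using tendsto_unique[OF trivial_limit_at_right_real F0r r] .
      moreover have "hm = F 0" using tendsto_unique[OF trivial_limit_at_left_real F0l l] .
      ultimately show "hp = f 0 \<and> hm = f 0" using F0 by simp
    next
      assume "hp = f 0 \<and> hm = f 0"
      then have "isCont F x" for x using allcont c_def by auto
      then show "continuous_on UNIV (fdag f)" using fdagF continuous_at_imp_continuous_on by auto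
    qed
    show "hp = f 0 \<and> hm = f 0 \<longrightarrow>
         (\<forall>m::nat. real m < \<bar>Re k\<bar> / 2 \<longrightarrow> Cm_on m {-1..1} (h(0 := hp))
              \<longrightarrow> Cm_on m UNIV (fdag f))"
    proof (intro impI allI)
      fix m :: nat
      assume hh: "hp = f 0 \<and> hm = f 0" and m: "real m < \<bar>Re k\<bar> / 2" and hC: "Cm_on m {-1..1} (h(0 := hp))"
      have "Cm_on m UNIV F"
      proof (rule smooth_lemma[rule_format, of m k "h(0 := hp)" F])
        show "real (2 * m) < - Re k" using m k_neg by simp
        show "Re k < 0" by (rule k_neg)
        show "Cm_on m {-1..1} (h(0 := hp))" by (rule hC)
        show "isCont F x" for x using allcont hh c_def by auto
        show "F (x + 1) = F x" for x using pF by simp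
        show "F x = (h(0 := hp)) x + Z False (- k) F x" if x: "x \<in> {-1..1}" for x
        proof (cases "x = 0")
          case True then show ?thesis using F0 hh by simp
        next
          case False then show ?thesis using Feq[OF x False] by (simp add: s_def)
        qed
      qed
      then show "Cm_on m UNIV (fdag f)" using fdagF by simp
    qed
  qed
qed


end
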